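(* Under the hypotheses of the maximum-bound theorem for the unbalanced scheme (i.e. $K_2=1$, $r_k\ge4/7$ for $k\ge2$, $\kappa\ge\|f'\|_{C[-\beta,\beta]}$, $\|\phi^0\|_\infty\le\beta$, $\tau_1\le\min\{(4/(11\varsigma m(\kappa+4\varepsilon^2/h^2)\Gamma(2-\alpha)))^{1/\alpha},(4/(11\kappa(1-\varsigma)m\Gamma(2-\alpha)))^{1/\alpha}\}$ and $\tau_n\le(4/(11(1-\varsigma)m(4\varepsilon^2/h^2+\kappa)\Gamma(2-\alpha)))^{1/\alpha}$ for all $n\ge1$), the solution of the unbalanced $L2$-$1_\sigma$-sESAV scheme satisfies, for every $n\ge1$, $$\|\phi^n\|_\infty\le\beta+\frac{\kappa m(V^{n-\varsigma}-1)\beta}{B^{(n)}_0+\kappa(1-\varsigma)m},$$ where the second term is $\le0$.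
   Context: Setting: $\Omega=(0,L)^2$ with periodic boundary conditions; constants $m>0$, $\varepsilon>0$, $\alpha\in(0,1)$, and $\varsigma:=\alpha/2$. The nonlinearity $f=-F'$ is one of: (double-well) $F(\phi)=\frac14(1-\phi^2)^2$, $f(\phi)=\phi-\phi^3$, with $\beta=1$; or (Flory–Huggins) $F(\phi)=\frac{\theta}{2}[(1+\phi)\ln(1+\phi)+(1-\phi)\ln(1-\phi)]-\frac{\theta_c}{2}\phi^2$, $f(\phi)=\frac{\theta}{2}\ln\frac{1-\phi}{1+\phi}+\theta_c\phi$ on $(-1,1)$, with $\theta_c>\theta>0$ and $\beta\in(0,1)$ the positive root of $f$. In both cases $f(\pm\beta)=0$. Spatial discretization: $M\in\mathbb N$, $h=L/M$; $\mathbb V_h$ is the space of real grid functions $v=\{v_{ij}\}_{i,j\in\mathbb Z}$ that are $M$-periodic in each index; $\langle v,w\rangle=h^2\sum_{i,j=1}^Mv_{ij}w_{ij}$, $\|v\|_\infty=\max_{1\le i,j\le M}|v_{ij}|$; $\Delta_hv_{ij}=h^{-2}(v_{i+1,j}+v_{i-1,j}+v_{i,j+1}+v_{i,j-1}-4v_{ij})$. Scalar functions act on grid functions pointwise. $E_{1h}[v]=\langle F(v),1\rangle$ and $g_h(v,w)=\exp(w)/\exp(E_{1h}[v])$ for $v\in\mathbb V_h$ (with $\|v\|_\infty<1$ in the Flory–Huggins case) and $w\in\mathbb R$. Auxiliary functional: $V:\mathbb R\to\mathbb R$ satisfies (A1) $V\in C^1(\mathbb R)\cap W^{2,\infty}(\mathbb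 R)$, $V(1)=1$, $V'(1)=0$, $|V'|\le K_1$; (A2) $0\le V\le K_2$ for a constant $K_2>0$; (A3) $|z_1-1|\le|z_2-1|$ implies $|V(z_1)-1|\le|V(z_2)-1|$. Time grid: $0=t_0<t_1<\dots<t_N=T$, $\tau_k=t_k-t_{k-1}$, $r_k=\tau_k/\tau_{k-1}$ ($k\ge2$), $\nabla_\tau v^k=v^k-v^{k-1}$, $\mathbb D_\tau v^k=\nabla_\tau v^k/\tau_k$, $\omega_\mu(t)=t^{\mu-1}/\Gamma(\mu)$. Constant $\kappa\ge0$; data $\phi^0\in\mathbb V_h$, $R^0\in\mathbb R$. For $n\ge2$ the predicted solution is $\hat\phi^n=\min\{\max\{(1+r_n)\phi^{n-1}-r_n\phi^{n-2},-\beta\},\beta\}$ (pointwise). $L2$-$1_\sigma$ discretization: $t_{k-\varsigma}=(1-\varsigma)t_k+\varsigma t_{k-1}$, $t_{k-1/2}=(t_k+t_{k-1})/2$; $a^{(n)}_{n-k}=\frac1{\tau_k}\int_{t_{k-1}}^{\min\{t_k,t_{n-\varsigma}\}}\omega_{1-\alpha}(t_{n-\varsigma}-s)\,ds$ ($1\le k\le n$), $b^{(n)}_{n-k}=\frac{2}{\tau_k(\tau_k+\tau_{k+1})}\int_{t_{k-1}}^{t_k}(s-t_{k-1/2})\omega_{1-\alpha}(t_{n-\varsigma}-s)\,ds$ ($1\le k\le n-1$); $B^{(1)}_0=a^{(1)}_0$, and for $n\ge2$: $B^{(n)}_0=a^{(n)}_0+b^{(n)}_1/r_n$, $B^{(n)}_{n-k}=a^{(n)}_{n-k}+b^{(n)}_{n-k+1}/r_k-b^{(n)}_{n-k}$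 for $2\le k\le n-1$, $B^{(n)}_{n-1}=a^{(n)}_{n-1}-b^{(n)}_{n-1}$; $\tilde{\mathbb D}^\alpha_\tau v^n=\sum_{k=1}^nB^{(n)}_{n-k}\nabla_\tau v^k$; $w^{k-\varsigma}=(1-\varsigma)w^k+\varsigma w^{k-1}$. Unbalanced $L2$-$1_\sigma$-sESAV scheme: $\hat\phi^1\in\mathbb V_h$ with $\|\hat\phi^1\|_\infty\le\beta$ solves $B^{(1)}_0(\hat\phi^1-\phi^0)=m(\varepsilon^2\Delta_h\hat\phi^{1-\varsigma}+f(\hat\phi^{1-\varsigma}))$; for $n\ge2$, $\hat\phi^n$ is the predicted solution above. For $n\ge1$ set $\hat\phi^{n-\varsigma}=(1-\varsigma)\hat\phi^n+\varsigma\phi^{n-1}$ and $V^{n-\varsigma}=V(g_h(\hat\phi^{n-\varsigma},R^{n-1}))$, and define $(\phi^n,R^n)$ by $\tilde{\mathbb D}^\alpha_\tau\phi^n=m(\varepsilon^2\Delta_h\phi^{n-\varsigma}+V^{n-\varsigma}f(\hat\phi^{n-\varsigma})-\kappa(\phi^{n-\varsigma}-V^{n-\varsigma}\hat\phi^{n-\varsigma}))$ and $\mathbb D_\tau R^n=-V^{n-\varsigma}\langle f(\hat\phi^{n-\varsigma}),\mathbb D_\tau\phi^n\rangle+\kappa\langle\phi^{n-\varsigma}-V^{n-\varsigma}\hat\phi^{n-\varsigma},\mathbb D_\tau\phi^n\rangle$. *)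

theory Defs
  imports "HOL-Analysis.Analysis"
begin

text \<open>Grid functions: M-periodic grid functions are represented by their values on
  the index box 0..M-1 (indices shifted by one w.r.t. the paper); neighbours are
  taken modulo M.\<close>

type_synonym grid = "nat \<Rightarrow> nat \<Rightarrow> real"

definition lap_h :: "nat \<Rightarrow> real \<Rightarrow> grid \<Rightarrow> grid" where
  "lap_h M h v i j = (v ((i + 1) mod M) j + v ((i + M - 1) mod M) j
                     + v i ((j + 1) mod M) + v i ((j + M - 1) mod M) - 4 * v i j) / h^2"

definition norm_inf :: "nat \<Rightarrow> grid \<Rightarrow> real" where
  "norm_inf M v = Max ((\<lambda>(i, j). \<bar>v i j\<bar>) ` ({..<M} \<times> {..<M}))"

definition ip_h :: "nat \<Rightarrow> real \<Rightarrow> grid \<Rightarrow> grid \<Rightarrow> real" where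
  "ip_h M h v w = h^2 * (\<Sum>i<M. \<Sum>j<M. v i j * w i j)"

definition E1h :: "nat \<Rightarrow> real \<Rightarrow> (real \<Rightarrow> real) \<Rightarrow> grid \<Rightarrow> real" where
  "E1h M h F v = ip_h M h (\<lambda>i j. F (v i j)) (\<lambda>_ _. 1)"

definition g_h :: "nat \<Rightarrow> real \<Rightarrow> (real \<Rightarrow> real) \<Rightarrow> grid \<Rightarrow> real \<Rightarrow> real" where
  "g_h M h F v w = exp w / exp (E1h M h F v)"

definition omega :: "real \<Rightarrow> real \<Rightarrow> real" where
  "omega \<mu> s = s powr (\<mu> - 1) / Gamma \<mu>"

definition tau :: "(nat \<Rightarrow> real) \<Rightarrow> nat \<Rightarrow> real" where
  "tau t k = t k - t (k - 1)"

definition rr :: "(nat \<Rightarrow> real) \<Rightarrow> nat \<Rightarrow> real" where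
  "rr t k = tau t k / tau t (k - 1)"

definition tsig :: "real \<Rightarrow> (nat \<Rightarrow> real) \<Rightarrow> nat \<Rightarrow> real" where
  "tsig \<alpha> t n = (1 - \<alpha>/2) * t n + (\<alpha>/2) * t (n - 1)"

definition tmid :: "(nat \<Rightarrow> real) \<Rightarrow> nat \<Rightarrow> real" where
  "tmid t k = (t k + t (k - 1)) / 2"

text \<open>acoef \<alpha> t n k is the paper's a^{(n)}_{n-k}; bcoef \<alpha> t n k is b^{(n)}_{n-k}.\<close>

definition acoef :: "real \<Rightarrow> (nat \<Rightarrow> real) \<Rightarrow> nat \<Rightarrow> nat \<Rightarrow> real" where
  "acoef \<alpha> t n k = (1 / tau t k) *
     integral {t (k - 1) .. min (t k) (tsig \<alpha> t n)} (\<lambda>s. omega (1 - \<alpha>) (tsig \<alpha> t n - s))"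

definition bcoef :: "real \<Rightarrow> (nat \<Rightarrow> real) \<Rightarrow> nat \<Rightarrow> nat \<Rightarrow> real" where
  "bcoef \<alpha> t n k = 2 / (tau t k * (tau t k + tau t (k + 1))) *
     integral {t (k - 1) .. t k} (\<lambda>s. (s - tmid t k) * omega (1 - \<alpha>) (tsig \<alpha> t n - s))"

text \<open>Bcoef \<alpha> t n k is the paper's B^{(n)}_{n-k}, for 1 \<le> k \<le> n.\<close>

definition Bcoef :: "real \<Rightarrow> (nat \<Rightarrow> real) \<Rightarrow> nat \<Rightarrow> nat \<Rightarrow> real" where
  "Bcoef \<alpha> t n k =
     (if n = 1 then acoef \<alpha> t 1 1
      else if k = n then acoef \<alpha> t n n + bcoef \<alpha> t n (n - 1) / rr t n
      else if k = 1 then acoef \<alpha> t n 1 - bcoef \<alpha> t n 1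
      else acoef \<alpha> t n k + bcoef \<alpha> t n (k - 1) / rr t k - bcoef \<alpha> t n k)"

end

theory Submission
  imports Defs
begin



definition Kf :: "real \<Rightarrow> real \<Rightarrow> real \<Rightarrow> real" where
  "Kf \<alpha> T s = omega (1 - \<alpha>) (T - s)"
definition Kd :: "real \<Rightarrow> real \<Rightarrow> real \<Rightarrow> real" where
  "Kd \<alpha> T s = \<alpha> * (T - s) powr (- \<alpha> - 1) / Gamma (1 - \<alpha>)"

lemma Gam_pos: "0 < (\<alpha>::real) \<Longrightarrow> \<alpha> < 1 \<Longrightarrow> Gamma (1 - \<alpha>) > 0"
  using Gamma_real_pos[of "1 - \<alpha>"] by simp

lemma Kf_eq: "Kf \<alpha> T s = (T - s) powr (- \<alpha>) / Gamma (1 - \<alpha>)"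
  by (simp add: Kf_def omega_def)

lemma Kf_deriv:
  assumes "s < T"
  shows "(Kf \<alpha> T has_real_derivative Kd \<alpha> T s) (at s)"
proof -
  have "((\<lambda>s. (T - s) powr (- \<alpha>)) has_real_derivative
        (- \<alpha> * (T - s) powr (- \<alpha> - real 1) * (- 1))) (at s)"
    by (rule DERIV_fun_powr) (use assms in \<open>auto intro!: derivative_eq_intros\<close>)
  hence "((\<lambda>s. (T - s) powr (- \<alpha>) / Gamma (1 - \<alpha>)) has_real_derivative
        (- \<alpha> * (T - s) powr (- \<alpha> - real 1) * (- 1)) / Gamma (1 - \<alpha>)) (at s)"
    by (rule DERIV_cdivide)
  thus ?thesis unfolding Kd_def Kf_eq[abs_def] by (simp add: algebra_simps)
qed

lemma Kd_mono:
  assumes "0 < \<alpha>" "\<alpha> < 1" "a \<le> b" "b < T"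
  shows "Kd \<alpha> T a \<le> Kd \<alpha> T b"
proof -
  have "(T - a) powr (- \<alpha> - 1) \<le> (T - b) powr (- \<alpha> - 1)"
    by (rule powr_mono2') (use assms in auto)
  thus ?thesis unfolding Kd_def using Gam_pos[OF assms(1,2)] assms
    by (intro divide_right_mono mult_left_mono) auto
qed

lemma Kd_nonneg: "0 < \<alpha> \<Longrightarrow> \<alpha> < 1 \<Longrightarrow> 0 \<le> Kd \<alpha> T s"
  unfolding Kd_def using Gam_pos by auto

lemma Kf_nonneg: "0 < \<alpha> \<Longrightarrow> \<alpha> < 1 \<Longrightarrow> 0 \<le> Kf \<alpha> T s"
  unfolding Kf_eq using Gam_pos by auto

lemma Kf_cont: "b < T \<Longrightarrow> continuous_on {a..b} (Kf \<alpha> T)"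
  unfolding Kf_eq divide_inverse by (intro continuous_intros) auto

lemma Kf_mvt:
  assumes "0 < \<alpha>" "\<alpha> < 1" "x < y" "y < T"
  shows "\<exists>z. x < z \<and> z < y \<and> Kf \<alpha> T y - Kf \<alpha> T x = (y - x) * Kd \<alpha> T z"
  using MVT2[OF assms(3), of "Kf \<alpha> T" "Kd \<alpha> T"] Kf_deriv assms by force




lemma ftc_real:
  assumes "a \<le> b" "\<And>x. (F has_real_derivative f x) (at x)"
  shows "(f has_integral (F b - F a)) {a..b}"
  by (rule fundamental_theorem_of_calculus)
     (use assms in \<open>auto simp: has_real_derivative_iff_has_vector_derivative[symmetric]
        intro: has_field_derivative_at_within\<close>)

lemma ftc_real':
  assumes "a \<le> b" "\<And>x. (F has_real_derivative f x) (at x)" "F b - F a = v"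
  shows "(f has_integral v) {a..b}"
  using ftc_real[OF assms(1,2)] assms(3) by simp

lemma int_lin: assumes "a \<le> b" shows "((\<lambda>s. s - (b + a)/2) has_integral 0) {a..b::real}"
  by (rule ftc_real'[OF assms, where F="\<lambda>s. (s - (b + a)/2)^2/2"])
     (auto intro!: derivative_eq_intros simp: power2_eq_square algebra_simps divide_simps)

lemma int_sq: assumes "a \<le> b" shows "((\<lambda>s. (s - (b + a)/2)^2) has_integral (b - a)^3/12) {a..b::real}"
  by (rule ftc_real'[OF assms, where F="\<lambda>s. (s - (b + a)/2)^3/3"])
     (auto intro!: derivative_eq_intros simp: power2_eq_square power3_eq_cube algebra_simps divide_simps)

lemma int_bms: assumes "a \<le> b" shows "((\<lambda>s. b - s) has_integral (b - a)^2/2) {a..b::real}"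
  by (rule ftc_real'[OF assms, where F="\<lambda>s. (b - s) * (s - b) / 2"])
     (auto intro!: derivative_eq_intros simp: power2_eq_square algebra_simps divide_simps)

lemma int_one: "a \<le> b \<Longrightarrow> ((\<lambda>s. 1) has_integral (b - a)) {a..b::real}"
  by (rule ftc_real'[where F="\<lambda>s. s"]) (auto intro!: derivative_eq_intros)




lemma K_diff:
  assumes "0 < \<alpha>" "\<alpha> < 1" "a \<le> x" "x \<le> y" "y \<le> b" "b < T"
  shows "Kd \<alpha> T a * (y - x) \<le> Kf \<alpha> T y - Kf \<alpha> T x \<and> Kf \<alpha> T y - Kf \<alpha> T x \<le> Kd \<alpha> T b * (y - x)"
proof (cases "x = y")
  case True thus ?thesis by simp
next
  case False
  hence "x < y" using assms by simp
  then obtain z where z: "x < z" "z < y" "Kf \<alpha> T y - Kf \<alpha> T x = (y - x) * Kd \<alpha> T z"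
    using Kf_mvt[OF assms(1,2) \<open>x < y\<close>, of T] assms by auto
  have "Kd \<alpha> T a \<le> Kd \<alpha> T z" by (rule Kd_mono) (use assms z in auto)
  moreover have "Kd \<alpha> T z \<le> Kd \<alpha> T b" by (rule Kd_mono) (use assms z in auto)
  ultimately show ?thesis using z(3) \<open>x < y\<close>
    by (auto simp: mult.commute intro: mult_right_mono)
qed

lemma K_int_bounds:
  assumes al: "0 < \<alpha>" "\<alpha> < 1" and ab: "a < b" "b < T"
  defines "IK \<equiv> integral {a..b} (Kf \<alpha> T)"
    and "IS \<equiv> integral {a..b} (\<lambda>s. (s - (b + a)/2) * Kf \<alpha> T s)"
  shows "0 \<le> IS" "IS \<le> Kd \<alpha> T b * (b - a)^3/12"
    "IK \<le> (b - a) * Kf \<alpha> T b - Kd \<alpha> T a * (b - a)^2/2"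
    "\<And>p q. 0 \<le> q \<Longrightarrow> q * (b - a)/2 \<le> p \<Longrightarrow> p * (b - a) * Kf \<alpha> T a \<le> p * IK - q * IS"
proof -
  let ?K = "Kf \<alpha> T" and ?m = "(b + a)/2"
  have cont: "continuous_on {a..b} ?K" by (rule Kf_cont) (use ab in auto)
  have hK: "(?K has_integral IK) {a..b}"
    unfolding IK_def using integrable_continuous_interval[OF cont] by (simp add: integrable_integral)
  have cont2: "continuous_on {a..b} (\<lambda>s. (s - ?m) * ?K s)"
    by (intro continuous_intros cont)
  have hS: "((\<lambda>s. (s - ?m) * ?K s) has_integral IS) {a..b}"
    unfolding IS_def using integrable_continuous_interval[OF cont2] by (simp add: integrable_integral)
  have hg: "((\<lambda>s. (s - ?m) * ?K s - ?K ?m * (s - ?m)) has_integral (IS - ?K ?m * 0)) {a..b}"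
    by (intro has_integral_diff hS has_integral_mult_right int_lin) (use ab in auto)
  have pw: "0 \<le> (s - ?m) * ?K s - ?K ?m * (s - ?m) \<and>
            (s - ?m) * ?K s - ?K ?m * (s - ?m) \<le> Kd \<alpha> T b * (s - ?m)^2"
    if s: "s \<in> {a..b}" for s
  proof (cases "?m \<le> s")
    case True
    have d: "Kd \<alpha> T a * (s - ?m) \<le> ?K s - ?K ?m \<and> ?K s - ?K ?m \<le> Kd \<alpha> T b * (s - ?m)"
      by (rule K_diff) (use al ab s True in auto)
    have e: "(s - ?m) * ?K s - ?K ?m * (s - ?m) = (s - ?m) * (?K s - ?K ?m)" by (simp add: algebra_simps)
    have "0 \<le> Kd \<alpha> T a" by (rule Kd_nonneg[OF al])
    hence "0 \<le> ?K s - ?K ?m" using d True by (meson mult_nonneg_nonneg diff_ge_0_iff_ge order_trans)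
    moreover have "(s - ?m) * (?K s - ?K ?m) \<le> (s - ?m) * (Kd \<alpha> T b * (s - ?m))"
      using d True by (intro mult_left_mono) auto
    moreover have "(s - ?m) * (Kd \<alpha> T b * (s - ?m)) = Kd \<alpha> T b * (s - ?m)^2"
      by (simp add: power2_eq_square)
    ultimately show ?thesis unfolding e using True by (simp add: mult_nonneg_nonneg)
  next
    case False
    have d: "Kd \<alpha> T a * (?m - s) \<le> ?K ?m - ?K s \<and> ?K ?m - ?K s \<le> Kd \<alpha> T b * (?m - s)"
      by (rule K_diff) (use al ab s False in auto)
    have e: "(s - ?m) * ?K s - ?K ?m * (s - ?m) = (?m - s) * (?K ?m - ?K s)" by (simp add: algebra_simps)
    have "0 \<le> Kd \<alpha> T a" by (rule Kd_nonneg[OF al])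
    hence "0 \<le> ?K ?m - ?K s" using d False by (meson mult_nonneg_nonneg diff_ge_0_iff_ge order_trans not_le less_imp_le)
    moreover have "(?m - s) * (?K ?m - ?K s) \<le> (?m - s) * (Kd \<alpha> T b * (?m - s))"
      using d False by (intro mult_left_mono) auto
    moreover have "(?m - s) * (Kd \<alpha> T b * (?m - s)) = Kd \<alpha> T b * (s - ?m)^2"
      by (subst power2_commute) (simp add: power2_eq_square)
    ultimately show ?thesis unfolding e using False by (simp add: mult_nonneg_nonneg)
  qed
  show "0 \<le> IS"
    using has_integral_nonneg[OF hg] pw by auto
  have hsq: "((\<lambda>s. Kd \<alpha> T b * (s - ?m)^2) has_integral Kd \<alpha> T b * ((b - a)^3/12)) {a..b}"
    by (intro has_integral_mult_right int_sq) (use ab in auto)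
  show "IS \<le> Kd \<alpha> T b * (b - a)^3/12"
    using has_integral_le[OF hg hsq] pw by auto
  have pw2: "?K s \<le> ?K b - Kd \<alpha> T a * (b - s)" if s: "s \<in> {a..b}" for s
    using K_diff[OF al, of a s b b T] s ab by auto
  have h2: "((\<lambda>s. ?K b * 1 - Kd \<alpha> T a * (b - s)) has_integral (?K b * (b - a) - Kd \<alpha> T a * ((b - a)^2/2))) {a..b}"
    by (intro has_integral_diff has_integral_mult_right int_one int_bms) (use ab in auto)
  show "IK \<le> (b - a) * ?K b - Kd \<alpha> T a * (b - a)^2/2"
    using has_integral_le[OF hK h2] pw2 by (auto simp: algebra_simps)
  fix p q :: real
  assume q: "0 \<le> q" "q * (b - a)/2 \<le> p"
  have pos: "0 \<le> p - q * (s - ?m)" if s: "s \<in> {a..b}" for s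
  proof -
    have "s - ?m \<le> (b - a)/2" using s by (auto simp: field_simps)
    hence "q * (s - ?m) \<le> q * ((b - a)/2)" using q by (intro mult_left_mono) auto
    thus ?thesis using q by auto
  qed
  have pw3: "?K a * (p * 1 - q * (s - ?m)) \<le> p * ?K s - q * ((s - ?m) * ?K s)" if s: "s \<in> {a..b}" for s
  proof -
    have "?K a \<le> ?K s"
    proof -
      have "Kd \<alpha> T a * (s - a) \<le> ?K s - ?K a" using K_diff[OF al, of a a s b T] s ab by auto
      moreover have "0 \<le> Kd \<alpha> T a * (s - a)" using Kd_nonneg[OF al, of T a] s by auto
      ultimately show ?thesis by linarith
    qed
    hence "?K a * (p - q * (s - ?m)) \<le> ?K s * (p - q * (s - ?m))"
      using pos[OF s] by (intro mult_right_mono) auto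
    thus ?thesis by (simp add: algebra_simps)
  qed
  have h3: "((\<lambda>s. ?K a * (p * 1 - q * (s - ?m))) has_integral ?K a * (p * (b - a) - q * 0)) {a..b}"
    by (intro has_integral_mult_right has_integral_diff int_one int_lin) (use ab in auto)
  have h4: "((\<lambda>s. p * ?K s - q * ((s - ?m) * ?K s)) has_integral (p * IK - q * IS)) {a..b}"
    by (intro has_integral_diff has_integral_mult_right hK hS)
  show "p * (b - a) * ?K a \<le> p * IK - q * IS"
    using has_integral_le[OF h3 h4] pw3 by (auto simp: algebra_simps)
qed




lemma Gamma_2m: "0 < (\<alpha>::real) \<Longrightarrow> \<alpha> < 1 \<Longrightarrow> Gamma (2 - \<alpha>) = (1 - \<alpha>) * Gamma (1 - \<alpha>)"
proof -
  assume a: "0 < \<alpha>" "\<alpha> < 1"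
  have "(1 - \<alpha>) \<notin> \<int>\<^sub>\<le>\<^sub>0" using a by (auto elim!: nonpos_Ints_cases)
  hence "Gamma ((1 - \<alpha>) + 1) = (1 - \<alpha>) * Gamma (1 - \<alpha>)" by (rule Gamma_plus1)
  thus ?thesis by (simp add: algebra_simps)
qed

lemma K_int_last:
  assumes al: "0 < \<alpha>" "\<alpha> < 1" and c: "c < T"
  shows "(Kf \<alpha> T has_integral (T - c) powr (1 - \<alpha>) / Gamma (2 - \<alpha>)) {c..T}"
proof -
  let ?F = "\<lambda>s. - ((T - s) powr (1 - \<alpha>) / Gamma (2 - \<alpha>))"
  have G: "Gamma (2 - \<alpha>) = (1 - \<alpha>) * Gamma (1 - \<alpha>)" by (rule Gamma_2m[OF al])
  have Gp: "Gamma (1 - \<alpha>) > 0" by (rule Gam_pos[OF al])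
  have cp: "continuous_on {c..T} (\<lambda>s. (T - s) powr (1 - \<alpha>))"
    by (rule continuous_on_powr') (use al in \<open>auto intro!: continuous_intros\<close>)
  have "Gamma (2 - \<alpha>) \<noteq> 0" unfolding G using mult_pos_pos[OF _ Gp, of "1 - \<alpha>"] al by linarith
  hence cont: "continuous_on {c..T} ?F"
    by (intro continuous_on_minus continuous_on_divide cp continuous_on_const) auto
  have der: "(?F has_vector_derivative Kf \<alpha> T x) (at x)" if x: "x \<in> {c<..<T}" for x
  proof -
    have "((\<lambda>s. (T - s) powr (1 - \<alpha>)) has_real_derivative
        ((1 - \<alpha>) * (T - x) powr (1 - \<alpha> - real 1) * (- 1))) (at x)"
      by (rule DERIV_fun_powr) (use x in \<open>auto intro!: derivative_eq_intros\<close>)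
    hence "(?F has_real_derivative - (((1 - \<alpha>) * (T - x) powr (1 - \<alpha> - real 1) * (- 1)) / Gamma (2 - \<alpha>))) (at x)"
      by (intro DERIV_minus DERIV_cdivide)
    moreover have "- (((1 - \<alpha>) * (T - x) powr (1 - \<alpha> - real 1) * (- 1)) / Gamma (2 - \<alpha>)) = Kf \<alpha> T x"
    proof -
      have e: "1 - \<alpha> - real 1 = - \<alpha>" by simp
      have ne: "1 - \<alpha> \<noteq> 0" using al by simp
      show ?thesis unfolding Kf_eq G e using ne by simp
    qed
    ultimately show ?thesis by (simp add: has_real_derivative_iff_has_vector_derivative)
  qed
  have "(Kf \<alpha> T has_integral ?F T - ?F c) {c..T}"
    by (rule fundamental_theorem_of_calculus_interior[OF _ cont der]) (use c in auto)
  thus ?thesis using al by simp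
qed




lemma t_mono:
  fixes t :: "nat \<Rightarrow> real" and i j n :: nat
  assumes tinc: "\<And>k. 1 \<le> k \<Longrightarrow> k \<le> n \<Longrightarrow> t (k - 1) < t k"
    and ij: "i \<le> j" "j \<le> n"
  shows "t i \<le> t j"
  using ij
proof (induction j)
  case 0 thus ?case by simp
next
  case (Suc j)
  show ?case
  proof (cases "i = Suc j")
    case True thus ?thesis by simp
  next
    case False
    hence "t i \<le> t j" using Suc by auto
    moreover have "t j < t (Suc j)" using tinc[of "Suc j"] Suc by auto
    ultimately show ?thesis by simp
  qed
qed

lemma tsig_facts:
  assumes al: "0 < \<alpha>" "\<alpha> < 1" and n: "1 \<le> n" and tn: "t (n - 1) < t n"
  shows "t (n - 1) < tsig \<alpha> t n" "tsig \<alpha> t n \<le> t n"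
    "tsig \<alpha> t n - t (n - 1) = (1 - \<alpha>/2) * tau t n"
proof -
  have "0 < (1 - \<alpha>/2) * (t n - t (n - 1))" using al tn by simp
  thus "t (n - 1) < tsig \<alpha> t n" unfolding tsig_def by (simp add: algebra_simps)
  have "0 \<le> (\<alpha>/2) * (t n - t (n - 1))" using al tn by simp
  thus "tsig \<alpha> t n \<le> t n" unfolding tsig_def by (simp add: algebra_simps)
  show "tsig \<alpha> t n - t (n - 1) = (1 - \<alpha>/2) * tau t n"
    unfolding tsig_def tau_def by (simp add: algebra_simps)
qed

lemma Kf_fun: "(\<lambda>s. omega (1 - \<alpha>) (T - s)) = Kf \<alpha> T"
  by (rule ext) (simp add: Kf_def)

lemma acoef_lt:
  assumes al: "0 < \<alpha>" "\<alpha> < 1" and tinc: "\<And>k. 1 \<le> k \<Longrightarrow> k \<le> n \<Longrightarrow> t (k - 1) < t k"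
    and k: "1 \<le> k" "k < n"
  shows "acoef \<alpha> t n k = integral {t (k - 1)..t k} (Kf \<alpha> (tsig \<alpha> t n)) / tau t k"
proof -
  have "t k \<le> t (n - 1)" by (rule t_mono[where t=t and n=n, OF tinc]) (use k in auto)
  moreover have "t (n - 1) < tsig \<alpha> t n" by (rule tsig_facts(1)[OF al]) (use k tinc[of n] in auto)
  ultimately have "min (t k) (tsig \<alpha> t n) = t k" by simp
  thus ?thesis unfolding acoef_def Kf_fun by simp
qed

lemma acoef_last:
  assumes al: "0 < \<alpha>" "\<alpha> < 1" and n: "1 \<le> n" and tn: "t (n - 1) < t n"
  shows "acoef \<alpha> t n n = ((1 - \<alpha>/2) * tau t n) powr (1 - \<alpha>) / Gamma (2 - \<alpha>) / tau t n"
proof -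
  have "min (t n) (tsig \<alpha> t n) = tsig \<alpha> t n" using tsig_facts[OF al n tn] by simp
  moreover have "integral {t (n - 1)..tsig \<alpha> t n} (Kf \<alpha> (tsig \<alpha> t n)) =
      (tsig \<alpha> t n - t (n - 1)) powr (1 - \<alpha>) / Gamma (2 - \<alpha>)"
    by (rule integral_unique, rule K_int_last[OF al]) (use tsig_facts[OF al n tn] in auto)
  ultimately show ?thesis unfolding acoef_def Kf_fun tsig_facts(3)[OF al n tn] by simp
qed

lemma bcoef_eq:
  "bcoef \<alpha> t n k = 2 / (tau t k * (tau t k + tau t (k + 1))) *
     integral {t (k - 1)..t k} (\<lambda>s. (s - (t k + t (k - 1))/2) * Kf \<alpha> (tsig \<alpha> t n) s)"
  unfolding bcoef_def tmid_def Kf_def by simp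




lemma alg1: "0 < (x::real) \<Longrightarrow> 0 < y \<Longrightarrow> 2 / (x * (x + y)) * x / 2 = 1 / (x + y)"
  by (simp add: divide_simps)
lemma alg2: "0 < (x::real) \<Longrightarrow> 0 < y \<Longrightarrow> 2 / (x * (x + y)) * I / (y / x) = I * (2 / (y * (x + y)))"
  by (simp add: divide_simps)

lemma alg3: "0 < (x::real) \<Longrightarrow> 0 < y \<Longrightarrow> (D * x^3/12) * (2 / (y * (x + y))) = D * (x^3 / (6 * y * (x + y)))"
  by (simp add: divide_simps)

lemma poly_ratio:
  fixes x y :: real
  assumes "0 < x" "0 < y" "4 * x \<le> 7 * y"
  shows "x^3 \<le> 3 * y^2 * (x + y)"
proof -
  have "x^2 \<le> (7/4 * y)^2" using assms by (intro power_mono) auto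
  hence "x^3 \<le> (7/4*y)^2 * x" using assms by (simp add: power3_eq_cube power2_eq_square mult_right_mono)
  also have "\<dots> \<le> 3 * y^2 * (x + y)"
  proof -
    have "x \<le> 48 * y" using assms by simp
    hence "y^2 * x \<le> y^2 * (48 * y)" by (intro mult_left_mono) auto
    thus ?thesis by (simp add: power2_eq_square algebra_simps)
  qed
  finally show ?thesis .
qed

context
  fixes \<alpha> :: real and t :: "nat \<Rightarrow> real" and n :: nat
  assumes al: "0 < \<alpha>" "\<alpha> < 1"
    and tinc: "\<And>k. 1 \<le> k \<Longrightarrow> k \<le> n \<Longrightarrow> t (k - 1) < t k"
begin

abbreviation "TT \<equiv> tsig \<alpha> t n"

lemma tau_pos: "1 \<le> k \<Longrightarrow> k \<le> n \<Longrightarrow> 0 < tau t k"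
  using tinc[of k] unfolding tau_def by simp

lemma tk_lt_T: "k < n \<Longrightarrow> t k < TT"
proof -
  assume k: "k < n"
  have "t k \<le> t (n - 1)" by (rule t_mono[where t=t and n=n, OF tinc]) (use k in auto)
  moreover have "t (n - 1) < TT" by (rule tsig_facts(1)[OF al]) (use k tinc[of n] in auto)
  ultimately show ?thesis by simp
qed

lemma interval_bounds:
  assumes k: "1 \<le> k" "k < n"
  shows "0 \<le> integral {t (k - 1)..t k} (\<lambda>s. (s - (t k + t (k - 1))/2) * Kf \<alpha> TT s)"
    "integral {t (k - 1)..t k} (\<lambda>s. (s - (t k + t (k - 1))/2) * Kf \<alpha> TT s)
       \<le> Kd \<alpha> TT (t k) * (tau t k)^3/12"
    "integral {t (k - 1)..t k} (Kf \<alpha> TT) \<le> tau t k * Kf \<alpha> TT (t k) - Kd \<alpha> TT (t (k - 1)) * (tau t k)^2/2"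
    "\<And>p q. 0 \<le> q \<Longrightarrow> q * tau t k / 2 \<le> p \<Longrightarrow>
       p * tau t k * Kf \<alpha> TT (t (k - 1)) \<le> p * integral {t (k - 1)..t k} (Kf \<alpha> TT)
         - q * integral {t (k - 1)..t k} (\<lambda>s. (s - (t k + t (k - 1))/2) * Kf \<alpha> TT s)"
proof -
  have ab: "t (k - 1) < t k" using tinc[of k] k by simp
  have bT: "t k < TT" using tk_lt_T k by simp
  note KB = K_int_bounds[OF al ab bT]
  show "0 \<le> integral {t (k - 1)..t k} (\<lambda>s. (s - (t k + t (k - 1))/2) * Kf \<alpha> TT s)"
    using KB(1) .
  show "integral {t (k - 1)..t k} (\<lambda>s. (s - (t k + t (k - 1))/2) * Kf \<alpha> TT s)
       \<le> Kd \<alpha> TT (t k) * (tau t k)^3/12" using KB(2) unfolding tau_def .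
  show "integral {t (k - 1)..t k} (Kf \<alpha> TT) \<le> tau t k * Kf \<alpha> TT (t k) - Kd \<alpha> TT (t (k - 1)) * (tau t k)^2/2"
    using KB(3) unfolding tau_def .
  fix p q :: real
  assume "0 \<le> q" "q * tau t k / 2 \<le> p"
  thus "p * tau t k * Kf \<alpha> TT (t (k - 1)) \<le> p * integral {t (k - 1)..t k} (Kf \<alpha> TT)
         - q * integral {t (k - 1)..t k} (\<lambda>s. (s - (t k + t (k - 1))/2) * Kf \<alpha> TT s)"
    using KB(4)[of q p] unfolding tau_def by simp
qed

lemma X_bound:
  assumes k: "1 \<le> k" "k + 1 \<le> n"
  shows "Kf \<alpha> TT (t (k - 1)) \<le> acoef \<alpha> t n k - bcoef \<alpha> t n k"
proof -
  have tk: "0 < tau t k" "0 < tau t (k + 1)" using tau_pos k by auto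
  define p where "p = 1 / tau t k"
  define q where "q = 2 / (tau t k * (tau t k + tau t (k + 1)))"
  have q0: "0 \<le> q" unfolding q_def using tk by simp
  have s0: "tau t k + tau t (k + 1) \<noteq> 0" using tk by simp
  have "q * tau t k / 2 = 1 / (tau t k + tau t (k + 1))" unfolding q_def by (rule alg1[OF tk])
  also have "\<dots> \<le> p" unfolding p_def using tk by (intro divide_left_mono) auto
  finally have qp: "q * tau t k / 2 \<le> p" .
  have "p * tau t k * Kf \<alpha> TT (t (k - 1)) = Kf \<alpha> TT (t (k - 1))" unfolding p_def using tk by simp
  moreover have "acoef \<alpha> t n k - bcoef \<alpha> t n k = p * integral {t (k - 1)..t k} (Kf \<alpha> TT)
         - q * integral {t (k - 1)..t k} (\<lambda>s. (s - (t k + t (k - 1))/2) * Kf \<alpha> TT s)"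
  proof -
    have ak: "acoef \<alpha> t n k = integral {t (k - 1)..t k} (Kf \<alpha> TT) / tau t k"
      using acoef_lt[where t=t and n=n, OF al tinc, of k] k by simp
    show ?thesis unfolding ak bcoef_eq p_def q_def by simp
  qed
  moreover have "p * tau t k * Kf \<alpha> TT (t (k - 1)) \<le> p * integral {t (k - 1)..t k} (Kf \<alpha> TT)
         - q * integral {t (k - 1)..t k} (\<lambda>s. (s - (t k + t (k - 1))/2) * Kf \<alpha> TT s)"
    using interval_bounds(4)[OF k(1) _ q0 qp] k by simp
  ultimately show ?thesis by linarith
qed

lemma bcoef_nonneg:
  assumes k: "1 \<le> k" "k + 1 \<le> n"
  shows "0 \<le> bcoef \<alpha> t n k"
proof -
  have tk: "0 < tau t k" "0 < tau t (k + 1)" using tau_pos k by auto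
  show ?thesis unfolding bcoef_eq using interval_bounds(1)[of k] k tk by simp
qed

lemma Y_bound:
  assumes k: "1 \<le> k" "k + 1 \<le> n"
  shows "- Kf \<alpha> TT (t k) + Kd \<alpha> TT (t (k - 1)) * tau t k / 2 \<le>
         bcoef \<alpha> t n k / rr t (k + 1) + bcoef \<alpha> t n k - acoef \<alpha> t n k"
proof -
  have tk: "0 < tau t k" "0 < tau t (k + 1)" using tau_pos k by auto
  have b0: "0 \<le> bcoef \<alpha> t n k" by (rule bcoef_nonneg[OF k])
  have "0 < rr t (k + 1)" unfolding rr_def using tk by simp
  hence "0 \<le> bcoef \<alpha> t n k / rr t (k + 1)" using b0 by simp
  moreover have "acoef \<alpha> t n k \<le> Kf \<alpha> TT (t k) - Kd \<alpha> TT (t (k - 1)) * tau t k / 2"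
  proof -
    have "acoef \<alpha> t n k = integral {t (k - 1)..t k} (Kf \<alpha> TT) / tau t k"
      using acoef_lt[where t=t and n=n, OF al tinc, of k] k by simp
    also have "\<dots> \<le> (tau t k * Kf \<alpha> TT (t k) - Kd \<alpha> TT (t (k - 1)) * (tau t k)^2/2) / tau t k"
      using interval_bounds(3)[of k] k tk by (intro divide_right_mono) auto
    also have "\<dots> = Kf \<alpha> TT (t k) - Kd \<alpha> TT (t (k - 1)) * tau t k / 2"
      using tk by (simp add: field_simps power2_eq_square)
    finally show ?thesis .
  qed
  ultimately show ?thesis using b0 by linarith
qed

lemma Z_bound:
  assumes k: "2 \<le> k" "k + 1 \<le> n" and r: "4/7 \<le> rr t k"
  shows "bcoef \<alpha> t n (k - 1) / rr t k \<le> Kd \<alpha> TT (t (k - 1)) * tau t k / 2"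
proof -
  have tk: "0 < tau t (k - 1)" "0 < tau t k" using tau_pos k by auto
  let ?x = "tau t (k - 1)" and ?y = "tau t k" and ?D = "Kd \<alpha> TT (t (k - 1))"
  let ?I = "integral {t (k - 1 - 1)..t (k - 1)} (\<lambda>s. (s - (t (k - 1) + t (k - 1 - 1))/2) * Kf \<alpha> TT s)"
  have kk: "k - 1 + 1 = k" using k by simp
  have D0: "0 \<le> ?D" by (rule Kd_nonneg[OF al])
  have I: "?I \<le> ?D * ?x^3/12" using interval_bounds(2)[of "k - 1"] k by simp
  have s0: "?x + ?y \<noteq> 0" "?x \<noteq> 0" "?y \<noteq> 0" using tk by auto
  have e: "bcoef \<alpha> t n (k - 1) / rr t k = ?I * (2 / (?y * (?x + ?y)))"
    unfolding bcoef_eq rr_def kk using alg2[OF tk] by simp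
  have c0: "0 \<le> 2 / (?y * (?x + ?y))" using tk by simp
  have "?I * (2 / (?y * (?x + ?y))) \<le> (?D * ?x^3/12) * (2 / (?y * (?x + ?y)))"
    using I c0 by (rule mult_right_mono)
  also have "\<dots> = ?D * (?x^3 / (6 * ?y * (?x + ?y)))" by (rule alg3[OF tk])
  also have "\<dots> \<le> ?D * (?y / 2)"
  proof (rule mult_left_mono[OF _ D0])
    have "4 * ?x \<le> 7 * ?y" using r tk unfolding rr_def by (simp add: field_simps)
    hence "?x^3 \<le> 3 * ?y^2 * (?x + ?y)" using poly_ratio tk by blast
    thus "?x^3 / (6 * ?y * (?x + ?y)) \<le> ?y / 2" using tk
      by (simp add: divide_simps power2_eq_square power3_eq_cube)
  qed
  finally show ?thesis unfolding e by simp
qed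

end



context
  fixes \<alpha> :: real and t :: "nat \<Rightarrow> real" and n :: nat
  assumes al: "0 < \<alpha>" "\<alpha> < 1"
    and tinc: "\<And>k. 1 \<le> k \<Longrightarrow> k \<le> n \<Longrightarrow> t (k - 1) < t k"
    and ratio: "\<And>k. 2 \<le> k \<Longrightarrow> k \<le> n \<Longrightarrow> 4/7 \<le> rr t k"
begin

lemma C1: "2 \<le> n \<Longrightarrow> 0 \<le> Bcoef \<alpha> t n 1"
proof -
  assume n: "2 \<le> n"
  have "Bcoef \<alpha> t n 1 = acoef \<alpha> t n 1 - bcoef \<alpha> t n 1" using n unfolding Bcoef_def by simp
  moreover have "Kf \<alpha> (tsig \<alpha> t n) (t (1 - 1)) \<le> acoef \<alpha> t n 1 - bcoef \<alpha> t n 1"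
    by (rule X_bound[where t=t and n=n, OF al tinc]) (use n in auto)
  moreover have "0 \<le> Kf \<alpha> (tsig \<alpha> t n) (t (1 - 1))" by (rule Kf_nonneg[OF al])
  ultimately show ?thesis by linarith
qed

lemma C2: "1 \<le> j \<Longrightarrow> j + 2 \<le> n \<Longrightarrow> Bcoef \<alpha> t n j \<le> Bcoef \<alpha> t n (j + 1)"
proof -
  assume j: "1 \<le> j" "j + 2 \<le> n"
  let ?T = "tsig \<alpha> t n"
  have B1: "Bcoef \<alpha> t n (j + 1) = acoef \<alpha> t n (j + 1) + bcoef \<alpha> t n j / rr t (j + 1) - bcoef \<alpha> t n (j + 1)"
    using j unfolding Bcoef_def by simp
  have X: "Kf \<alpha> ?T (t j) \<le> acoef \<alpha> t n (j + 1) - bcoef \<alpha> t n (j + 1)"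
    using X_bound[where t=t and n=n, OF al tinc, of "j + 1"] j by simp
  have Y: "- Kf \<alpha> ?T (t j) + Kd \<alpha> ?T (t (j - 1)) * tau t j / 2 \<le>
         bcoef \<alpha> t n j / rr t (j + 1) + bcoef \<alpha> t n j - acoef \<alpha> t n j"
    by (rule Y_bound[where t=t and n=n, OF al tinc]) (use j in auto)
  have tj: "0 < tau t j" using tau_pos[where t=t and n=n, OF al tinc, of j] j by simp
  have D0: "0 \<le> Kd \<alpha> ?T (t (j - 1)) * tau t j / 2" using Kd_nonneg[OF al] tj by simp
  show ?thesis
  proof (cases "j = 1")
    case True
    have "Bcoef \<alpha> t n j = acoef \<alpha> t n j - bcoef \<alpha> t n j" using j True unfolding Bcoef_def by simp
    thus ?thesis using B1 X Y D0 True by simp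
  next
    case False
    have "Bcoef \<alpha> t n j = acoef \<alpha> t n j + bcoef \<alpha> t n (j - 1) / rr t j - bcoef \<alpha> t n j"
      using j False unfolding Bcoef_def by simp
    moreover have "bcoef \<alpha> t n (j - 1) / rr t j \<le> Kd \<alpha> ?T (t (j - 1)) * tau t j / 2"
      by (rule Z_bound[where t=t and n=n, OF al tinc]) (use j False ratio[of j] in auto)
    ultimately show ?thesis using B1 X Y by linarith
  qed
qed

lemma C3: "2 \<le> n \<Longrightarrow>
  (\<alpha>/2) * ((1 - \<alpha>/2) * tau t n) powr (- \<alpha>) / Gamma (2 - \<alpha>) \<le> Bcoef \<alpha> t n n - Bcoef \<alpha> t n (n - 1)"
proof -
  assume n: "2 \<le> n"
  let ?T = "tsig \<alpha> t n"
  have tn: "t (n - 1) < t n" using tinc[of n] n by simp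
  have taun: "0 < tau t n" using tn unfolding tau_def by simp
  have Bn: "Bcoef \<alpha> t n n = acoef \<alpha> t n n + bcoef \<alpha> t n (n - 1) / rr t n"
    using n unfolding Bcoef_def by simp
  have nn: "n - 1 + 1 = n" using n by simp
  have Y: "- Kf \<alpha> ?T (t (n - 1)) + Kd \<alpha> ?T (t (n - 1 - 1)) * tau t (n - 1) / 2 \<le>
         bcoef \<alpha> t n (n - 1) / rr t n + bcoef \<alpha> t n (n - 1) - acoef \<alpha> t n (n - 1)"
    using Y_bound[where t=t and n=n, OF al tinc, of "n - 1"] n nn by simp
  have rest: "acoef \<alpha> t n n - Kf \<alpha> ?T (t (n - 1)) \<le> Bcoef \<alpha> t n n - Bcoef \<alpha> t n (n - 1)"
  proof (cases "n - 1 = 1")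
    case True
    have "Bcoef \<alpha> t n (n - 1) = acoef \<alpha> t n (n - 1) - bcoef \<alpha> t n (n - 1)"
      using n True unfolding Bcoef_def by simp
    moreover have "0 \<le> Kd \<alpha> ?T (t (n - 1 - 1)) * tau t (n - 1)"
    proof -
      have "0 < tau t (n - 1)" using tau_pos[where t=t and n=n, OF al tinc, of "n - 1"] n by simp
      thus ?thesis using Kd_nonneg[OF al, of ?T "t (n - 1 - 1)"] by simp
    qed
    ultimately show ?thesis using Bn Y by linarith
  next
    case False
    have "Bcoef \<alpha> t n (n - 1) = acoef \<alpha> t n (n - 1) + bcoef \<alpha> t n (n - 1 - 1) / rr t (n - 1)
          - bcoef \<alpha> t n (n - 1)"
    proof -
      have "n - 1 \<noteq> n" "n \<noteq> 1" using n by auto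
      thus ?thesis using False unfolding Bcoef_def by simp
    qed
    moreover have "bcoef \<alpha> t n (n - 1 - 1) / rr t (n - 1) \<le> Kd \<alpha> ?T (t (n - 1 - 1)) * tau t (n - 1) / 2"
      by (rule Z_bound[where t=t and n=n, OF al tinc]) (use n False ratio[of "n - 1"] in auto)
    ultimately show ?thesis using Bn Y by linarith
  qed
  define u where "u = (1 - \<alpha>/2) * tau t n"
  have u0: "0 < u" unfolding u_def using al taun by simp
  define w where "w = u powr (- \<alpha>)"
  have G: "Gamma (2 - \<alpha>) = (1 - \<alpha>) * Gamma (1 - \<alpha>)" by (rule Gamma_2m[OF al])
  have Gp: "0 < Gamma (1 - \<alpha>)" by (rule Gam_pos[OF al])
  have an: "acoef \<alpha> t n n = (1 - \<alpha>/2) * w / Gamma (2 - \<alpha>)"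
  proof -
    have "u powr (1 - \<alpha>) = u * w" unfolding w_def using u0
      by (simp add: powr_diff powr_minus divide_inverse)
    moreover have "acoef \<alpha> t n n = u powr (1 - \<alpha>) / Gamma (2 - \<alpha>) / tau t n"
      using acoef_last[OF al _ tn] n unfolding u_def by simp
    ultimately have "acoef \<alpha> t n n = u * w / Gamma (2 - \<alpha>) / tau t n" by simp
    thus ?thesis unfolding u_def using taun by simp
  qed
  have Kn: "Kf \<alpha> ?T (t (n - 1)) = (1 - \<alpha>) * w / Gamma (2 - \<alpha>)"
  proof -
    have "Kf \<alpha> ?T (t (n - 1)) = w / Gamma (1 - \<alpha>)"
      unfolding Kf_eq w_def u_def using tsig_facts(3)[OF al _ tn] n by simp
    also have "\<dots> = (1 - \<alpha>) * w / Gamma (2 - \<alpha>)" unfolding G using al Gp by simp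
    finally show ?thesis .
  qed
  have "acoef \<alpha> t n n - Kf \<alpha> ?T (t (n - 1)) = (\<alpha>/2) * w / Gamma (2 - \<alpha>)"
  proof -
    have g1: "Gamma (1 - \<alpha>) \<noteq> 0" using Gp by linarith
    have g0: "Gamma (2 - \<alpha>) \<noteq> 0" unfolding G using al g1 by simp
    show ?thesis unfolding an Kn using g0 by (simp add: field_simps)
  qed
  thus ?thesis using rest unfolding w_def u_def by simp
qed

end



lemma hist:
  fixes c x :: "nat \<Rightarrow> real"
  shows "(\<And>k. 1 \<le> k \<Longrightarrow> k < p \<Longrightarrow> c k \<le> c (k + 1)) \<Longrightarrow> (1 \<le> p \<Longrightarrow> 0 \<le> c 1) \<Longrightarrow>
    (\<And>k. k \<le> p \<Longrightarrow> x k \<le> \<beta>) \<Longrightarrow>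
    - (\<Sum>k = 1..p. c k * (x k - x (k - 1))) \<le> (if p = 0 then 0 else c p) * (\<beta> - x p)"
proof (induction p)
  case 0 thus ?case by simp
next
  case (Suc p)
  show ?case
  proof (cases "p = 0")
    case True
    have "c 1 * (x 0 - \<beta>) \<le> 0" using Suc.prems(2) Suc.prems(3)[of 0] True
      by (intro mult_nonneg_nonpos) auto
    thus ?thesis using True by (simp add: algebra_simps)
  next
    case False
    have IH: "- (\<Sum>k = 1..p. c k * (x k - x (k - 1))) \<le> c p * (\<beta> - x p)"
      using Suc.IH Suc.prems False by auto
    have m: "c p \<le> c (p + 1)" using Suc.prems(1)[of p] False by auto
    have "0 \<le> (c (p + 1) - c p) * (\<beta> - x p)" using m Suc.prems(3)[of p] by (intro mult_nonneg_nonneg) auto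
    moreover have "(\<Sum>k = 1..Suc p. c k * (x k - x (k - 1))) =
        (\<Sum>k = 1..p. c k * (x k - x (k - 1))) + c (p + 1) * (x (p + 1) - x p)" by simp
    ultimately show ?thesis using IH by (simp add: algebra_simps)
  qed
qed

lemma core:
  fixes B0 q m w \<kappa> \<sigma> V \<beta> P ph Nn Np S fh hv :: real
  assumes eq: "B0 * (P - ph) + S = m * (w * (((1 - \<sigma>) * Nn + \<sigma> * Np) - 4 * ((1 - \<sigma>) * P + \<sigma> * ph))
        + V * fh - \<kappa> * (((1 - \<sigma>) * P + \<sigma> * ph) - V * hv))"
    and Nn: "Nn \<le> 4 * P" and Np: "Np \<le> 4 * \<beta>" and S: "- S \<le> q * (\<beta> - ph)"
    and g: "fh + \<kappa> * hv \<le> \<kappa> * \<beta>" and ph: "ph \<le> \<beta>"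
    and coef: "\<sigma> * m * (\<kappa> + 4 * w) \<le> B0 - q"
    and pos: "0 < m" "0 \<le> w" "0 \<le> \<sigma>" "\<sigma> \<le> 1" "0 \<le> V" "0 \<le> \<kappa>"
    and A: "0 < B0 + \<kappa> * (1 - \<sigma>) * m"
  shows "P \<le> \<beta> + \<kappa> * m * (V - 1) * \<beta> / (B0 + \<kappa> * (1 - \<sigma>) * m)"
proof -
  have e1: "m * w * (1 - \<sigma>) * (Nn - 4 * P) \<le> 0"
    using pos Nn by (intro mult_nonneg_nonpos) auto
  have e2: "m * w * \<sigma> * (Np - 4 * ph) \<le> m * w * \<sigma> * (4 * \<beta> - 4 * ph)"
    using pos Np by (intro mult_left_mono) auto
  have e3: "m * V * (fh + \<kappa> * hv) \<le> m * V * (\<kappa> * \<beta>)"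
    using pos g by (intro mult_left_mono) auto
  have e4: "(B0 - q - \<sigma> * m * (\<kappa> + 4 * w)) * ph \<le> (B0 - q - \<sigma> * m * (\<kappa> + 4 * w)) * \<beta>"
    using coef ph by (intro mult_left_mono) auto
  have e5: "- S \<le> q * (\<beta> - ph)" by (rule S)
  have expand: "B0 * P + \<kappa> * (1 - \<sigma>) * m * P = B0 * ph - S + m * w * (1 - \<sigma>) * (Nn - 4 * P)
      + m * w * \<sigma> * (Np - 4 * ph) + m * V * (fh + \<kappa> * hv) - m * \<kappa> * \<sigma> * ph"
    using eq by (simp add: algebra_simps)
  have key: "(B0 + \<kappa> * (1 - \<sigma>) * m) * P \<le> (B0 + \<kappa> * (1 - \<sigma>) * m) * \<beta> + \<kappa> * m * (V - 1) * \<beta>"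
  proof -
    have "(B0 + \<kappa> * (1 - \<sigma>) * m) * P = B0 * P + \<kappa> * (1 - \<sigma>) * m * P" by (simp add: algebra_simps)
    also have "\<dots> \<le> B0 * ph + q * (\<beta> - ph) + m * w * \<sigma> * (4 * \<beta> - 4 * ph) + m * V * (\<kappa> * \<beta>)
       - m * \<kappa> * \<sigma> * ph"
      unfolding expand using e1 e2 e3 e5 by linarith
    also have "\<dots> = (B0 - q - \<sigma> * m * (\<kappa> + 4 * w)) * ph + q * \<beta> + 4 * m * w * \<sigma> * \<beta> + m * V * (\<kappa> * \<beta>)"
      by (simp add: algebra_simps)
    also have "\<dots> \<le> (B0 - q - \<sigma> * m * (\<kappa> + 4 * w)) * \<beta> + q * \<beta> + 4 * m * w * \<sigma> * \<beta> + m * V * (\<kappa> * \<beta>)"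
      using e4 by linarith
    also have "\<dots> = (B0 + \<kappa> * (1 - \<sigma>) * m) * \<beta> + \<kappa> * m * (V - 1) * \<beta>"
      by (simp add: algebra_simps)
    finally show ?thesis .
  qed
  have "P \<le> ((B0 + \<kappa> * (1 - \<sigma>) * m) * \<beta> + \<kappa> * m * (V - 1) * \<beta>) / (B0 + \<kappa> * (1 - \<sigma>) * m)"
    using key A by (simp add: pos_le_divide_eq mult.commute)
  also have "\<dots> = \<beta> + \<kappa> * m * (V - 1) * \<beta> / (B0 + \<kappa> * (1 - \<sigma>) * m)"
    using A by (simp add: add_divide_distrib)
  finally show ?thesis .
qed

lemma core_min:
  fixes B0 q m w \<kappa> \<sigma> V \<beta> P ph Nn Np S fh hv :: real
  assumes eq: "B0 * (P - ph) + S = m * (w * (((1 - \<sigma>) * Nn + \<sigma> * Np) - 4 * ((1 - \<sigma>) * P + \<sigma> * ph))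
        + V * fh - \<kappa> * (((1 - \<sigma>) * P + \<sigma> * ph) - V * hv))"
    and Nn: "4 * P \<le> Nn" and Np: "- (4 * \<beta>) \<le> Np" and S: "S \<le> q * (\<beta> + ph)"
    and g: "- (\<kappa> * \<beta>) \<le> fh + \<kappa> * hv" and ph: "- \<beta> \<le> ph"
    and coef: "\<sigma> * m * (\<kappa> + 4 * w) \<le> B0 - q"
    and pos: "0 < m" "0 \<le> w" "0 \<le> \<sigma>" "\<sigma> \<le> 1" "0 \<le> V" "0 \<le> \<kappa>"
    and A: "0 < B0 + \<kappa> * (1 - \<sigma>) * m"
  shows "- P \<le> \<beta> + \<kappa> * m * (V - 1) * \<beta> / (B0 + \<kappa> * (1 - \<sigma>) * m)"
proof (rule core[where ph="- ph" and Nn="- Nn" and Np="- Np" and S="- S" and fh="- fh" and hv="- hv" and q=q and w=w])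
  show "B0 * (- P - - ph) + - S = m * (w * ((1 - \<sigma>) * - Nn + \<sigma> * - Np - 4 * ((1 - \<sigma>) * - P + \<sigma> * - ph))
        + V * - fh - \<kappa> * ((1 - \<sigma>) * - P + \<sigma> * - ph - V * - hv))"
  proof -
    have "B0 * (- P - - ph) + - S = - (B0 * (P - ph) + S)" by (simp add: algebra_simps)
    also note eq
    finally show ?thesis by (simp add: algebra_simps)
  qed
qed (use assms in auto)

lemma norm_inf_ge:
  "i < M \<Longrightarrow> j < M \<Longrightarrow> \<bar>v i j\<bar> \<le> norm_inf M v"
  unfolding norm_inf_def by (rule Max_ge) auto

lemma norm_inf_le:
  "1 \<le> M \<Longrightarrow> (\<And>i j. i < M \<Longrightarrow> j < M \<Longrightarrow> \<bar>v i j\<bar> \<le> B) \<Longrightarrow> norm_inf M v \<le> B"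
proof -
  assume M: "1 \<le> M" and b: "\<And>i j. i < M \<Longrightarrow> j < M \<Longrightarrow> \<bar>v i j\<bar> \<le> B"
  have "(0, 0) \<in> {..<M} \<times> {..<M}" using M by auto
  hence ne: "(\<lambda>(i, j). \<bar>v i j\<bar>) ` ({..<M} \<times> {..<M}) \<noteq> {}" by blast
  show ?thesis unfolding norm_inf_def using b by (subst Max_le_iff[OF _ ne]) auto
qed

lemma grid_max:
  fixes v :: grid
  assumes "1 \<le> M"
  shows "\<exists>i0 j0. i0 < M \<and> j0 < M \<and> (\<forall>i j. i < M \<longrightarrow> j < M \<longrightarrow> v i j \<le> v i0 j0)"
proof -
  let ?S = "{..<M} \<times> {..<M}"
  have fin: "finite ((\<lambda>(i, j). v i j) ` ?S)" by (intro finite_imageI) auto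
  have "(0, 0) \<in> ?S" using assms by auto
  hence ne: "(\<lambda>(i, j). v i j) ` ?S \<noteq> {}" by blast
  obtain p where p: "p \<in> ?S" "(\<lambda>(i, j). v i j) p = Max ((\<lambda>(i, j). v i j) ` ?S)"
    using Max_in[OF fin ne] by auto
  have "\<forall>i j. i < M \<longrightarrow> j < M \<longrightarrow> v i j \<le> (\<lambda>(i, j). v i j) p"
  proof (intro allI impI)
    fix i j assume "i < M" "j < M"
    hence "v i j \<in> (\<lambda>(i, j). v i j) ` ?S" by force
    thus "v i j \<le> (\<lambda>(i, j). v i j) p" unfolding p(2) by (rule Max_ge[OF fin])
  qed
  thus ?thesis using p(1) by (cases p) auto
qed

lemma grid_min:
  fixes v :: grid
  assumes "1 \<le> M"
  shows "\<exists>i0 j0. i0 < M \<and> j0 < M \<and> (\<forall>i j. i < M \<longrightarrow> j < M \<longrightarrow> v i0 j0 \<le> v i j)"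
  using grid_max[OF assms, of "\<lambda>i j. - v i j"] by auto

lemma nonneg_chain:
  fixes c :: "nat \<Rightarrow> real"
  assumes mono: "\<And>k. 1 \<le> k \<Longrightarrow> k < p \<Longrightarrow> c k \<le> c (k + 1)" and c1: "0 \<le> c 1"
  shows "1 \<le> k \<Longrightarrow> k \<le> p \<Longrightarrow> 0 \<le> c k"
proof (induction k)
  case 0 thus ?case by simp
next
  case (Suc k)
  show ?case
  proof (cases "k = 0")
    case True thus ?thesis using c1 by simp
  next
    case False
    hence "0 \<le> c k" using Suc by auto
    moreover have "c k \<le> c (k + 1)" using mono[of k] Suc False by auto
    ultimately show ?thesis by simp
  qed
qed




lemma f_props:
  fixes f :: "real \<Rightarrow> real" and F :: "real \<Rightarrow> real"
  assumes nonlin: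
      "(\<beta> = 1 \<and> F = (\<lambda>x. (1 - x^2)^2 / 4) \<and> f = (\<lambda>x. x - x^3))
       \<or> (\<exists>\<theta> \<theta>c. 0 < \<theta> \<and> \<theta> < \<theta>c
            \<and> F = (\<lambda>x. \<theta>/2 * ((1 + x) * ln (1 + x) + (1 - x) * ln (1 - x)) - \<theta>c/2 * x^2)
            \<and> f = (\<lambda>x. \<theta>/2 * ln ((1 - x) / (1 + x)) + \<theta>c * x)
            \<and> 0 < \<beta> \<and> \<beta> < 1 \<and> f \<beta> = 0)"
  shows "0 < \<beta> \<and> f \<beta> = 0 \<and> f (- \<beta>) = 0 \<and> (\<forall>x. - \<beta> \<le> x \<and> x \<le> \<beta> \<longrightarrow> (\<exists>D. (f has_real_derivative D) (at x)))"
  using nonlin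
proof
  assume h: "\<beta> = 1 \<and> F = (\<lambda>x. (1 - x^2)^2 / 4) \<and> f = (\<lambda>x. x - x^3)"
  have "\<forall>x. \<exists>D. (f has_real_derivative D) (at x)"
    using h by (auto intro!: derivative_eq_intros)
  thus ?thesis using h by auto
next
  assume "\<exists>\<theta> \<theta>c. 0 < \<theta> \<and> \<theta> < \<theta>c
            \<and> F = (\<lambda>x. \<theta>/2 * ((1 + x) * ln (1 + x) + (1 - x) * ln (1 - x)) - \<theta>c/2 * x^2)
            \<and> f = (\<lambda>x. \<theta>/2 * ln ((1 - x) / (1 + x)) + \<theta>c * x)
            \<and> 0 < \<beta> \<and> \<beta> < 1 \<and> f \<beta> = 0"
  then obtain \<theta> \<theta>c where h: "f = (\<lambda>x. \<theta>/2 * ln ((1 - x) / (1 + x)) + \<theta>c * x)"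
    "0 < \<beta>" "\<beta> < 1" "f \<beta> = 0" by blast
  have "f (- \<beta>) = - f \<beta>"
  proof -
    have "ln ((1 + \<beta>) / (1 - \<beta>)) = - ln ((1 - \<beta>) / (1 + \<beta>))"
      using h(2,3) by (simp add: ln_div)
    thus ?thesis unfolding h(1) by simp
  qed
  moreover have "\<exists>D. (f has_real_derivative D) (at x)" if x: "- \<beta> \<le> x" "x \<le> \<beta>" for x
  proof -
    have "0 < 1 - x" "0 < 1 + x" using x h by auto
    hence "0 < (1 - x) / (1 + x)" by simp
    thus ?thesis unfolding h(1) by (auto intro!: derivative_eq_intros simp: \<open>0 < 1 + x\<close>)
  qed
  ultimately show ?thesis using h by auto
qed

lemma f_bounds:
  fixes f :: "real \<Rightarrow> real"
  assumes fb: "f \<beta> = 0" "f (- \<beta>) = 0"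
    and diff: "\<And>x. - \<beta> \<le> x \<Longrightarrow> x \<le> \<beta> \<Longrightarrow> \<exists>D. (f has_real_derivative D) (at x)"
    and kap: "\<And>x. x \<in> {-\<beta>..\<beta>} \<Longrightarrow> \<bar>deriv f x\<bar> \<le> \<kappa>"
    and y: "- \<beta> \<le> y" "y \<le> \<beta>"
  shows "f y + \<kappa> * y \<le> \<kappa> * \<beta>" "- (\<kappa> * \<beta>) \<le> f y + \<kappa> * y"
proof -
  let ?g = "\<lambda>x. f x + \<kappa> * x"
  have gd: "\<exists>D. (?g has_real_derivative D) (at x) \<and> D \<ge> 0" if x: "- \<beta> \<le> x" "x \<le> \<beta>" for x
  proof -
    obtain D where D: "(f has_real_derivative D) (at x)" using diff[OF x] by blast
    hence "deriv f x = D" by (rule DERIV_imp_deriv)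
    hence "\<bar>D\<bar> \<le> \<kappa>" using kap[of x] x by auto
    moreover have "(?g has_real_derivative D + \<kappa>) (at x)"
      using D by (auto intro!: derivative_eq_intros)
    ultimately show ?thesis by (intro exI[of _ "D + \<kappa>"]) auto
  qed
  have "?g y \<le> ?g \<beta>"
    by (rule DERIV_nonneg_imp_nondecreasing[OF y(2)]) (use gd y in auto)
  thus "f y + \<kappa> * y \<le> \<kappa> * \<beta>" using fb by simp
  have "?g (- \<beta>) \<le> ?g y"
    by (rule DERIV_nonneg_imp_nondecreasing[OF y(1)]) (use gd y in auto)
  thus "- (\<kappa> * \<beta>) \<le> f y + \<kappa> * y" using fb by simp
qed




lemma tau_pow:
  fixes \<alpha> \<tau> Y :: real
  assumes "0 < \<alpha>" "0 < \<tau>" "0 < Y" "\<tau> \<le> Y powr (1 / \<alpha>)"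
  shows "\<tau> powr \<alpha> \<le> Y"
proof -
  have "\<tau> powr \<alpha> \<le> (Y powr (1 / \<alpha>)) powr \<alpha>" by (rule powr_mono2) (use assms in auto)
  also have "\<dots> = Y" using assms by (simp add: powr_powr)
  finally show ?thesis .
qed

lemma alg4: "0 < (\<tau>::real) \<Longrightarrow> 0 < P \<Longrightarrow> 0 < G \<Longrightarrow> c * (\<tau> / P) / G / \<tau> = c / (G * P)"
  by (simp add: field_simps)

lemma coef_n1:
  fixes \<alpha> \<tau> m X G :: real
  assumes al: "0 < \<alpha>" "\<alpha> < 1" and tp: "0 < \<tau>" and mX: "0 < m" "0 < X" and G: "0 < G"
    and tb: "\<tau> \<le> (4 / (11 * (\<alpha>/2) * m * X * G)) powr (1 / \<alpha>)"
  shows "(\<alpha>/2) * m * X \<le> ((1 - \<alpha>/2) * \<tau>) powr (1 - \<alpha>) / G / \<tau>"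
proof -
  define P where "P = \<tau> powr \<alpha>"
  have P0: "0 < P" unfolding P_def using tp by simp
  have sX: "0 < (\<alpha>/2) * m * X" using al mX by simp
  have "P \<le> 4 / (11 * (\<alpha>/2) * m * X * G)" unfolding P_def
    by (rule tau_pow[OF al(1) tp _ tb]) (use al mX G in simp)
  hence h1: "(\<alpha>/2) * m * X * G * P \<le> 4/11" using sX G P0 by (simp add: field_simps)
  have c: "1/2 \<le> (1 - \<alpha>/2) powr (1 - \<alpha>)"
  proof -
    have "(1 - \<alpha>/2) powr 1 \<le> (1 - \<alpha>/2) powr (1 - \<alpha>)" by (rule powr_mono') (use al in auto)
    thus ?thesis using al by simp
  qed
  have e: "((1 - \<alpha>/2) * \<tau>) powr (1 - \<alpha>) / G / \<tau> = (1 - \<alpha>/2) powr (1 - \<alpha>) / (G * P)"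
  proof -
    have a: "\<tau> powr (1 - \<alpha>) = \<tau> / P" unfolding P_def using tp by (simp add: powr_diff)
    have b: "((1 - \<alpha>/2) * \<tau>) powr (1 - \<alpha>) = (1 - \<alpha>/2) powr (1 - \<alpha>) * \<tau> powr (1 - \<alpha>)"
      by (rule powr_mult)
    show ?thesis unfolding b a by (rule alg4[OF tp P0 G])
  qed
  have "(\<alpha>/2) * m * X \<le> (4/11) / (G * P)" using h1 G P0 by (simp add: field_simps)
  also have "\<dots> \<le> (1 - \<alpha>/2) powr (1 - \<alpha>) / (G * P)" using c G P0 by (intro divide_right_mono) auto
  finally show ?thesis unfolding e .
qed

lemma coef_n2:
  fixes \<alpha> \<tau> m X G :: real
  assumes al: "0 < \<alpha>" "\<alpha> < 1" and tp: "0 < \<tau>" and mX: "0 < m" "0 < X" and G: "0 < G"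
    and tb: "\<tau> \<le> (4 / (11 * (1 - \<alpha>/2) * m * X * G)) powr (1 / \<alpha>)"
  shows "(\<alpha>/2) * m * X \<le> (\<alpha>/2) * ((1 - \<alpha>/2) * \<tau>) powr (- \<alpha>) / G"
proof -
  define P where "P = \<tau> powr \<alpha>"
  have P0: "0 < P" unfolding P_def using tp by simp
  have s1: "0 < 1 - \<alpha>/2" using al by simp
  have "P \<le> 4 / (11 * (1 - \<alpha>/2) * m * X * G)" unfolding P_def
    by (rule tau_pow[OF al(1) tp _ tb]) (use al mX G in simp)
  hence h1: "(1 - \<alpha>/2) * m * X * G * P \<le> 4/11" using s1 mX G P0 by (simp add: field_simps)
  hence h2: "m * X * G * P \<le> 1"
  proof -
    have "(1/2) * (m * X * G * P) \<le> (1 - \<alpha>/2) * (m * X * G * P)"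
      using al mX G P0 by (intro mult_right_mono) auto
    thus ?thesis using h1 by (simp add: algebra_simps)
  qed
  have c: "1 \<le> (1 - \<alpha>/2) powr (- \<alpha>)"
  proof -
    have "(1 - \<alpha>/2) powr 0 \<le> (1 - \<alpha>/2) powr (- \<alpha>)" by (rule powr_mono') (use al in auto)
    thus ?thesis using s1 by simp
  qed
  have e: "((1 - \<alpha>/2) * \<tau>) powr (- \<alpha>) = (1 - \<alpha>/2) powr (- \<alpha>) / P"
  proof -
    have "((1 - \<alpha>/2) * \<tau>) powr (- \<alpha>) = (1 - \<alpha>/2) powr (- \<alpha>) * \<tau> powr (- \<alpha>)"
      by (rule powr_mult)
    moreover have "\<tau> powr (- \<alpha>) = 1 / P" unfolding P_def by (rule powr_minus_divide)
    ultimately show ?thesis by simp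
  qed
  have GP: "0 < G * P" using G P0 by simp
  have "m * X * (G * P) \<le> 1" using h2 by (simp add: mult.assoc)
  hence "m * X \<le> 1 / (G * P)" using GP by (simp add: pos_le_divide_eq)
  also have "\<dots> \<le> (1 - \<alpha>/2) powr (- \<alpha>) / (G * P)" using c GP by (intro divide_right_mono) auto
  finally have "m * X \<le> (1 - \<alpha>/2) powr (- \<alpha>) / (G * P)" .
  hence "(\<alpha>/2) * (m * X) \<le> (\<alpha>/2) * ((1 - \<alpha>/2) powr (- \<alpha>) / (G * P))"
    using al by (intro mult_left_mono) auto
  moreover have "(\<alpha>/2) * ((1 - \<alpha>/2) powr (- \<alpha>) / (G * P)) = (\<alpha>/2) * ((1 - \<alpha>/2) powr (- \<alpha>) / P) / G"
    by (simp add: mult.commute)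
  ultimately show ?thesis unfolding e by (simp add: ac_simps)
qed




lemma conv_bound:
  fixes a b \<sigma> \<beta> :: real
  assumes "\<bar>a\<bar> \<le> \<beta>" "\<bar>b\<bar> \<le> \<beta>" "0 \<le> \<sigma>" "\<sigma> \<le> 1"
  shows "- \<beta> \<le> (1 - \<sigma>) * a + \<sigma> * b \<and> (1 - \<sigma>) * a + \<sigma> * b \<le> \<beta>"
proof -
  have "(1 - \<sigma>) * a \<le> (1 - \<sigma>) * \<beta>" "\<sigma> * b \<le> \<sigma> * \<beta>"
    using assms by (auto intro!: mult_left_mono)
  moreover have "(1 - \<sigma>) * (- \<beta>) \<le> (1 - \<sigma>) * a"
    using mult_left_mono[of "- \<beta>" a "1 - \<sigma>"] assms by auto
  moreover have "\<sigma> * (- \<beta>) \<le> \<sigma> * b"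
    using mult_left_mono[of "- \<beta>" b \<sigma>] assms by auto
  ultimately show ?thesis by (simp add: algebra_simps)
qed

definition nbsum :: "nat \<Rightarrow> grid \<Rightarrow> nat \<Rightarrow> nat \<Rightarrow> real" where
  "nbsum M v i j = v ((i + 1) mod M) j + v ((i + M - 1) mod M) j + v i ((j + 1) mod M) + v i ((j + M - 1) mod M)"

lemma lap_ps:
  assumes "h \<noteq> 0"
  shows "ee * lap_h M h (\<lambda>i j. (1 - \<sigma>) * u i j + \<sigma> * v i j) i j =
    (ee / h^2) * (((1 - \<sigma>) * nbsum M u i j + \<sigma> * nbsum M v i j) - 4 * ((1 - \<sigma>) * u i j + \<sigma> * v i j))"
  unfolding lap_h_def nbsum_def by (simp add: divide_inverse algebra_simps)

lemma nbsum_le: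
  assumes "1 \<le> M" "\<And>i j. i < M \<Longrightarrow> j < M \<Longrightarrow> v i j \<le> B" "i < M" "j < M"
  shows "nbsum M v i j \<le> 4 * B"
proof -
  have M0: "0 < M" using assms by simp
  have "v ((i + 1) mod M) j \<le> B" "v ((i + M - 1) mod M) j \<le> B"
       "v i ((j + 1) mod M) \<le> B" "v i ((j + M - 1) mod M) \<le> B"
    using assms(2) assms(3,4) M0 by auto
  thus ?thesis unfolding nbsum_def by simp
qed

lemma nbsum_ge:
  assumes "1 \<le> M" "\<And>i j. i < M \<Longrightarrow> j < M \<Longrightarrow> B \<le> v i j" "i < M" "j < M"
  shows "4 * B \<le> nbsum M v i j"
proof -
  have M0: "0 < M" using assms by simp
  have "B \<le> v ((i + 1) mod M) j" "B \<le> v ((i + M - 1) mod M) j"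
       "B \<le> v i ((j + 1) mod M)" "B \<le> v i ((j + M - 1) mod M)"
    using assms(2) assms(3,4) M0 by auto
  thus ?thesis unfolding nbsum_def by simp
qed

lemma step:
  fixes \<phi> :: "nat \<Rightarrow> grid" and hh :: grid and c :: "nat \<Rightarrow> real" and f :: "real \<Rightarrow> real"
  assumes M: "1 \<le> M" and n: "1 \<le> n" and h: "h \<noteq> 0"
    and hb: "\<And>k i j. k < n \<Longrightarrow> i < M \<Longrightarrow> j < M \<Longrightarrow> \<bar>\<phi> k i j\<bar> \<le> \<beta>"
    and hh: "\<And>i j. i < M \<Longrightarrow> j < M \<Longrightarrow> \<bar>hh i j\<bar> \<le> \<beta>"
    and fb: "\<And>y. - \<beta> \<le> y \<Longrightarrow> y \<le> \<beta> \<Longrightarrow> f y + \<kappa> * y \<le> \<kappa> * \<beta> \<and> - (\<kappa> * \<beta>) \<le> f y + \<kappa> * y"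
    and cmono: "\<And>k. 1 \<le> k \<Longrightarrow> k < n - 1 \<Longrightarrow> c k \<le> c (k + 1)"
    and c1: "1 \<le> n - 1 \<Longrightarrow> 0 \<le> c 1"
    and coef: "\<sigma> * m * (\<kappa> + 4 * (ee / h^2)) \<le> c n - (if n - 1 = 0 then 0 else c (n - 1))"
    and pos: "0 < m" "0 \<le> ee" "0 \<le> \<sigma>" "\<sigma> \<le> 1" "0 \<le> V" "0 \<le> \<kappa>"
    and A: "0 < c n + \<kappa> * (1 - \<sigma>) * m"
    and eq: "\<And>i j. i < M \<Longrightarrow> j < M \<Longrightarrow>
      (\<Sum>k = 1..n. c k * (\<phi> k i j - \<phi> (k - 1) i j)) =
      m * (ee * lap_h M h (\<lambda>i j. (1 - \<sigma>) * \<phi> n i j + \<sigma> * \<phi> (n - 1) i j) i j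
          + V * f ((1 - \<sigma>) * hh i j + \<sigma> * \<phi> (n - 1) i j)
          - \<kappa> * (((1 - \<sigma>) * \<phi> n i j + \<sigma> * \<phi> (n - 1) i j) - V * ((1 - \<sigma>) * hh i j + \<sigma> * \<phi> (n - 1) i j)))"
    and ij: "i < M" "j < M"
  shows "\<bar>\<phi> n i j\<bar> \<le> \<beta> + \<kappa> * m * (V - 1) * \<beta> / (c n + \<kappa> * (1 - \<sigma>) * m)"
proof -
  let ?q = "if n - 1 = 0 then 0 else c (n - 1)"
  let ?w = "ee / h^2"
  let ?bd = "\<beta> + \<kappa> * m * (V - 1) * \<beta> / (c n + \<kappa> * (1 - \<sigma>) * m)"
  have w0: "0 \<le> ?w" using pos by simp
  have nn: "n = Suc (n - 1)" using n by simp
  have eq2: "c n * (\<phi> n a b - \<phi> (n - 1) a b) + (\<Sum>k = 1..n - 1. c k * (\<phi> k a b - \<phi> (k - 1) a b)) =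
      m * (?w * (((1 - \<sigma>) * nbsum M (\<phi> n) a b + \<sigma> * nbsum M (\<phi> (n - 1)) a b)
              - 4 * ((1 - \<sigma>) * \<phi> n a b + \<sigma> * \<phi> (n - 1) a b))
          + V * f ((1 - \<sigma>) * hh a b + \<sigma> * \<phi> (n - 1) a b)
          - \<kappa> * (((1 - \<sigma>) * \<phi> n a b + \<sigma> * \<phi> (n - 1) a b) - V * ((1 - \<sigma>) * hh a b + \<sigma> * \<phi> (n - 1) a b)))"
    if ab: "a < M" "b < M" for a b
  proof -
    have "(\<Sum>k = 1..n. c k * (\<phi> k a b - \<phi> (k - 1) a b)) =
          (\<Sum>k = 1..n - 1. c k * (\<phi> k a b - \<phi> (k - 1) a b)) + c n * (\<phi> n a b - \<phi> (n - 1) a b)"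
      by (subst nn, subst sum.cl_ivl_Suc) (use n in simp)
    thus ?thesis using eq[OF ab] lap_ps[OF h, where ee=ee and \<sigma>=\<sigma> and u="\<phi> n" and v="\<phi> (n - 1)" and i=a and j=b and M=M] by simp
  qed
  have hs: "- \<beta> \<le> (1 - \<sigma>) * hh a b + \<sigma> * \<phi> (n - 1) a b \<and> (1 - \<sigma>) * hh a b + \<sigma> * \<phi> (n - 1) a b \<le> \<beta>"
    if ab: "a < M" "b < M" for a b
    using conv_bound[OF hh[OF ab] hb[OF _ ab, of "n - 1"] pos(3,4)] n by simp
  have histb: "\<phi> k a b \<le> \<beta>" "- \<phi> k a b \<le> \<beta>" if "k < n" "a < M" "b < M" for k a b
    using hb[OF that] by auto
  obtain i0 j0 where m0: "i0 < M" "j0 < M" "\<And>i j. i < M \<Longrightarrow> j < M \<Longrightarrow> \<phi> n i j \<le> \<phi> n i0 j0"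
    using grid_max[OF M, of "\<phi> n"] by blast
  have up: "\<phi> n i0 j0 \<le> ?bd"
  proof (rule core[OF eq2[OF m0(1,2)] _ _ _ _ _ coef pos(1) w0 pos(3-6) A])
    show "nbsum M (\<phi> n) i0 j0 \<le> 4 * \<phi> n i0 j0" by (rule nbsum_le[OF M _ m0(1,2)]) (use m0 in auto)
    show "nbsum M (\<phi> (n - 1)) i0 j0 \<le> 4 * \<beta>" by (rule nbsum_le[OF M _ m0(1,2)]) (use histb n in auto)
    show "- (\<Sum>k = 1..n - 1. c k * (\<phi> k i0 j0 - \<phi> (k - 1) i0 j0)) \<le> ?q * (\<beta> - \<phi> (n - 1) i0 j0)"
      by (rule hist[where c=c and x="\<lambda>k. \<phi> k i0 j0"]) (use cmono c1 histb m0 n in auto)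
    show "f ((1 - \<sigma>) * hh i0 j0 + \<sigma> * \<phi> (n - 1) i0 j0) + \<kappa> * ((1 - \<sigma>) * hh i0 j0 + \<sigma> * \<phi> (n - 1) i0 j0)
        \<le> \<kappa> * \<beta>" using fb[OF conjunct1[OF hs[OF m0(1,2)]] conjunct2[OF hs[OF m0(1,2)]]] by (rule conjunct1)
    show "\<phi> (n - 1) i0 j0 \<le> \<beta>" using histb m0 n by auto
  qed
  obtain i1 j1 where m1: "i1 < M" "j1 < M" "\<And>i j. i < M \<Longrightarrow> j < M \<Longrightarrow> \<phi> n i1 j1 \<le> \<phi> n i j"
    using grid_min[OF M, of "\<phi> n"] by blast
  have lo: "- \<phi> n i1 j1 \<le> ?bd"
  proof (rule core_min[OF eq2[OF m1(1,2)] _ _ _ _ _ coef pos(1) w0 pos(3-6) A])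
    show "4 * \<phi> n i1 j1 \<le> nbsum M (\<phi> n) i1 j1" by (rule nbsum_ge[OF M _ m1(1,2)]) (use m1 in auto)
    show "- (4 * \<beta>) \<le> nbsum M (\<phi> (n - 1)) i1 j1"
    proof -
      have "4 * (- \<beta>) \<le> nbsum M (\<phi> (n - 1)) i1 j1"
      proof (rule nbsum_ge[OF M _ m1(1,2)])
        fix a b assume "a < M" "b < M"
        hence "- \<phi> (n - 1) a b \<le> \<beta>" using histb(2)[of "n - 1" a b] n by simp
        thus "- \<beta> \<le> \<phi> (n - 1) a b" by simp
      qed
      thus ?thesis by simp
    qed
    have hneg: "- (\<Sum>k = 1..n - 1. c k * ((- \<phi> k i1 j1) - (- \<phi> (k - 1) i1 j1))) \<le> ?q * (\<beta> - (- \<phi> (n - 1) i1 j1))"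
      by (rule hist[where c=c and x="\<lambda>k. - \<phi> k i1 j1"]) (use cmono c1 histb m1 n in auto)
    show "(\<Sum>k = 1..n - 1. c k * (\<phi> k i1 j1 - \<phi> (k - 1) i1 j1)) \<le> ?q * (\<beta> + \<phi> (n - 1) i1 j1)"
    proof -
      have "(\<Sum>k = 1..n - 1. c k * ((- \<phi> k i1 j1) - (- \<phi> (k - 1) i1 j1)))
          = (\<Sum>k = 1..n - 1. - (c k * (\<phi> k i1 j1 - \<phi> (k - 1) i1 j1)))"
        by (rule sum.cong) (simp_all add: right_diff_distrib)
      also have "\<dots> = - (\<Sum>k = 1..n - 1. c k * (\<phi> k i1 j1 - \<phi> (k - 1) i1 j1))"
        by (rule sum_negf)
      finally show ?thesis using hneg by simp
    qed
    show "- (\<kappa> * \<beta>) \<le> f ((1 - \<sigma>) * hh i1 j1 + \<sigma> * \<phi> (n - 1) i1 j1) + \<kappa> * ((1 - \<sigma>) * hh i1 j1 + \<sigma> * \<phi> (n - 1) i1 j1)"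
      using fb[OF conjunct1[OF hs[OF m1(1,2)]] conjunct2[OF hs[OF m1(1,2)]]] by (rule conjunct2)
    show "- \<beta> \<le> \<phi> (n - 1) i1 j1" using histb(2)[of "n - 1" i1 j1] m1 n by simp
  qed
  have "\<phi> n i j \<le> ?bd" using m0(3)[OF ij] up by linarith
  moreover have "- \<phi> n i j \<le> ?bd" using m1(3)[OF ij] lo by linarith
  ultimately show ?thesis by linarith
qed




lemma clamp_bound: "0 < (b::real) \<Longrightarrow> \<bar>min (max x (- b)) b\<bar> \<le> b"
  by (simp add: min_def max_def abs_le_iff)

theorem mainTheorem13:
  fixes L \<epsilon> m \<alpha> \<kappa> \<beta> T K1 R0 :: real
    and M N :: nat
    and F f V V' :: "real \<Rightarrow> real"
    and t :: "nat \<Rightarrow> real"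
    and \<phi> \<phi>hat :: "nat \<Rightarrow> grid"
    and R :: "nat \<Rightarrow> real"
  defines "h \<equiv> L / real M"
    and "\<sigma> \<equiv> \<alpha> / 2"
  assumes L_pos: "L > 0" and M_pos: "M \<ge> 1"
    and m_pos: "m > 0" and eps_pos: "\<epsilon> > 0" and alpha: "0 < \<alpha>" "\<alpha> < 1"
    and nonlin:
      "(\<beta> = 1 \<and> F = (\<lambda>x. (1 - x^2)^2 / 4) \<and> f = (\<lambda>x. x - x^3))
       \<or> (\<exists>\<theta> \<theta>c. 0 < \<theta> \<and> \<theta> < \<theta>c
            \<and> F = (\<lambda>x. \<theta>/2 * ((1 + x) * ln (1 + x) + (1 - x) * ln (1 - x)) - \<theta>c/2 * x^2)
            \<and> f = (\<lambda>x. \<theta>/2 * ln ((1 - x) / (1 + x)) + \<theta>c * x)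
            \<and> 0 < \<beta> \<and> \<beta> < 1 \<and> f \<beta> = 0)"
    (* auxiliary functional V, assumptions (A1)-(A3) with K_2 = 1 *)
    and V_deriv: "\<And>x. (V has_real_derivative V' x) (at x)"
    and V'_cont: "continuous_on UNIV V'"
    and V'_lip: "\<exists>Lp. \<forall>x y. \<bar>V' x - V' y\<bar> \<le> Lp * \<bar>x - y\<bar>"
    and V_one: "V 1 = 1" and V'_one: "V' 1 = 0"
    and V'_bnd: "\<And>x. \<bar>V' x\<bar> \<le> K1"
    and V_range: "\<And>x. 0 \<le> V x \<and> V x \<le> 1"
    and V_mono: "\<And>z1 z2. \<bar>z1 - 1\<bar> \<le> \<bar>z2 - 1\<bar> \<Longrightarrow> \<bar>V z1 - 1\<bar> \<le> \<bar>V z2 - 1\<bar>"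
    (* time grid *)
    and t0: "t 0 = 0" and tN: "t N = T"
    and t_mono: "\<And>k. 1 \<le> k \<Longrightarrow> k \<le> N \<Longrightarrow> t (k - 1) < t k"
    and ratio: "\<And>k. 2 \<le> k \<Longrightarrow> k \<le> N \<Longrightarrow> rr t k \<ge> 4/7"
    (* stabilization *)
    and kappa: "\<kappa> \<ge> 0" "\<And>x. x \<in> {-\<beta>..\<beta>} \<Longrightarrow> \<bar>deriv f x\<bar> \<le> \<kappa>"
    (* initial data *)
    and init: "norm_inf M (\<phi> 0) \<le> \<beta>" and R_init: "R 0 = R0"
    (* step size restrictions *)
    and tau1: "tau t 1 \<le> min
        ((4 / (11 * \<sigma> * m * (\<kappa> + 4 * \<epsilon>^2 / h^2) * Gamma (2 - \<alpha>))) powr (1 / \<alpha>))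
        ((4 / (11 * \<kappa> * (1 - \<sigma>) * m * Gamma (2 - \<alpha>))) powr (1 / \<alpha>))"
    and taun: "\<And>n. 1 \<le> n \<Longrightarrow> n \<le> N \<Longrightarrow>
        tau t n \<le> (4 / (11 * (1 - \<sigma>) * m * (4 * \<epsilon>^2 / h^2 + \<kappa>) * Gamma (2 - \<alpha>))) powr (1 / \<alpha>)"
    (* the unbalanced L2-1_sigma-sESAV scheme: starting step *)
    and hat1_bnd: "N \<ge> 1 \<Longrightarrow> norm_inf M (\<phi>hat 1) \<le> \<beta>"
    and hat1_eq: "\<And>i j. N \<ge> 1 \<Longrightarrow> i < M \<Longrightarrow> j < M \<Longrightarrow>
        Bcoef \<alpha> t 1 1 * (\<phi>hat 1 i j - \<phi> 0 i j)
        = m * (\<epsilon>^2 * lap_h M h (\<lambda>i j. (1 - \<sigma>) * \<phi>hat 1 i j + \<sigma> * \<phi> 0 i j) i j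
               + f ((1 - \<sigma>) * \<phi>hat 1 i j + \<sigma> * \<phi> 0 i j))"
    (* predicted solution *)
    and hat_pred: "\<And>n i j. 2 \<le> n \<Longrightarrow> n \<le> N \<Longrightarrow> i < M \<Longrightarrow> j < M \<Longrightarrow>
        \<phi>hat n i j = min (max ((1 + rr t n) * \<phi> (n - 1) i j - rr t n * \<phi> (n - 2) i j) (- \<beta>)) \<beta>"
    (* phi equation *)
    and phi_eq: "\<And>n i j. 1 \<le> n \<Longrightarrow> n \<le> N \<Longrightarrow> i < M \<Longrightarrow> j < M \<Longrightarrow>
        (let hs = (\<lambda>i j. (1 - \<sigma>) * \<phi>hat n i j + \<sigma> * \<phi> (n - 1) i j);
             ps = (\<lambda>i j. (1 - \<sigma>) * \<phi> n i j + \<sigma> * \<phi> (n - 1) i j);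
             Vn = V (g_h M h F hs (R (n - 1)))
         in (\<Sum>k = 1..n. Bcoef \<alpha> t n k * (\<phi> k i j - \<phi> (k - 1) i j))
            = m * (\<epsilon>^2 * lap_h M h ps i j + Vn * f (hs i j) - \<kappa> * (ps i j - Vn * hs i j)))"
    (* R equation *)
    and R_eq: "\<And>n. 1 \<le> n \<Longrightarrow> n \<le> N \<Longrightarrow>
        (let hs = (\<lambda>i j. (1 - \<sigma>) * \<phi>hat n i j + \<sigma> * \<phi> (n - 1) i j);
             ps = (\<lambda>i j. (1 - \<sigma>) * \<phi> n i j + \<sigma> * \<phi> (n - 1) i j);
             Vn = V (g_h M h F hs (R (n - 1)));
             D\<phi> = (\<lambda>i j. (\<phi> n i j - \<phi> (n - 1) i j) / tau t n)
         in (R n - R (n - 1)) / tau t n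
            = - Vn * ip_h M h (\<lambda>i j. f (hs i j)) D\<phi>
              + \<kappa> * ip_h M h (\<lambda>i j. ps i j - Vn * hs i j) D\<phi>)"
  shows "\<forall>n. 1 \<le> n \<and> n \<le> N \<longrightarrow>
     (let Vn = V (g_h M h F (\<lambda>i j. (1 - \<sigma>) * \<phi>hat n i j + \<sigma> * \<phi> (n - 1) i j) (R (n - 1)));
          corr = \<kappa> * m * (Vn - 1) * \<beta> / (Bcoef \<alpha> t n n + \<kappa> * (1 - \<sigma>) * m)
      in norm_inf M (\<phi> n) \<le> \<beta> + corr \<and> corr \<le> 0)"
proof -
  have hpos: "0 < h" unfolding h_def using L_pos M_pos by simp
  have hne: "h \<noteq> 0" using hpos by simp
  have sig: "\<sigma> = \<alpha>/2" by (simp add: \<sigma>_def)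
  have sig0: "0 \<le> \<sigma>" "\<sigma> \<le> 1" "0 < \<sigma>" using alpha sig by auto
  have fp: "0 < \<beta> \<and> f \<beta> = 0 \<and> f (- \<beta>) = 0 \<and> (\<forall>x. - \<beta> \<le> x \<and> x \<le> \<beta> \<longrightarrow> (\<exists>D. (f has_real_derivative D) (at x)))"
    by (rule f_props[OF nonlin])
  have bpos: "0 < \<beta>" using fp by blast
  have fbnd: "f y + \<kappa> * y \<le> \<kappa> * \<beta> \<and> - (\<kappa> * \<beta>) \<le> f y + \<kappa> * y" if "- \<beta> \<le> y" "y \<le> \<beta>" for y
  proof -
    have d: "\<And>x. - \<beta> \<le> x \<Longrightarrow> x \<le> \<beta> \<Longrightarrow> \<exists>D. (f has_real_derivative D) (at x)" using fp by blast
    have f1: "f \<beta> = 0" and f2: "f (- \<beta>) = 0" using fp by auto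
    show ?thesis using f_bounds[OF f1 f2 d kappa(2) that] by simp
  qed
  have tinc: "\<And>k. 1 \<le> k \<Longrightarrow> k \<le> N \<Longrightarrow> t (k - 1) < t k" by (rule t_mono)
  have w0: "0 < \<epsilon>^2 / h^2" using eps_pos hpos by simp
  have Gp: "0 < Gamma (2 - \<alpha>)" using Gamma_real_pos[of "2 - \<alpha>"] alpha by simp
  have coefs: "(\<forall>k. 1 \<le> k \<longrightarrow> k < n - 1 \<longrightarrow> Bcoef \<alpha> t n k \<le> Bcoef \<alpha> t n (k + 1))
      \<and> (1 \<le> n - 1 \<longrightarrow> 0 \<le> Bcoef \<alpha> t n 1)
      \<and> \<sigma> * m * (\<kappa> + 4 * (\<epsilon>^2 / h^2)) \<le> Bcoef \<alpha> t n n - (if n - 1 = 0 then 0 else Bcoef \<alpha> t n (n - 1))"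
    if n: "1 \<le> n" "n \<le> N" for n
  proof -
    have tinc_n: "\<And>k. 1 \<le> k \<Longrightarrow> k \<le> n \<Longrightarrow> t (k - 1) < t k" using tinc n by auto
    have ratio_n: "\<And>k. 2 \<le> k \<Longrightarrow> k \<le> n \<Longrightarrow> 4/7 \<le> rr t k" using ratio n by auto
    have e4: "4 * (\<epsilon>^2 / h^2) = 4 * \<epsilon>^2 / h^2" by simp
    show ?thesis
    proof (cases "n = 1")
      case True
      have t1: "0 < tau t 1" using tinc[of 1] n unfolding tau_def by simp
      have X0: "0 < \<kappa> + 4 * \<epsilon>^2 / h^2" using kappa(1) w0 by simp
      have tb: "tau t 1 \<le> (4 / (11 * (\<alpha>/2) * m * (\<kappa> + 4 * \<epsilon>^2 / h^2) * Gamma (2 - \<alpha>))) powr (1 / \<alpha>)"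
        using tau1 unfolding sig by simp
      have c: "(\<alpha>/2) * m * (\<kappa> + 4 * \<epsilon>^2 / h^2) \<le> ((1 - \<alpha>/2) * tau t 1) powr (1 - \<alpha>) / Gamma (2 - \<alpha>) / tau t 1"
        by (rule coef_n1[OF alpha t1 m_pos X0 Gp tb])
      have B: "Bcoef \<alpha> t 1 1 = ((1 - \<alpha>/2) * tau t 1) powr (1 - \<alpha>) / Gamma (2 - \<alpha>) / tau t 1"
        unfolding Bcoef_def using acoef_last[OF alpha, of 1 t] tinc[of 1] n by simp
      show ?thesis using True c B unfolding sig e4 by simp
    next
      case False
      hence n2: "2 \<le> n" using n by simp
      have m1: "\<forall>k. 1 \<le> k \<longrightarrow> k < n - 1 \<longrightarrow> Bcoef \<alpha> t n k \<le> Bcoef \<alpha> t n (k + 1)"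
        using C2[where t=t and n=n, OF alpha tinc_n ratio_n] by auto
      have m2: "0 \<le> Bcoef \<alpha> t n 1" by (rule C1[where t=t and n=n, OF alpha tinc_n ratio_n n2])
      have tn: "0 < tau t n" using tinc[of n] n unfolding tau_def by simp
      have X0: "0 < 4 * \<epsilon>^2 / h^2 + \<kappa>" using kappa(1) w0 by simp
      have tb: "tau t n \<le> (4 / (11 * (1 - \<alpha>/2) * m * (4 * \<epsilon>^2 / h^2 + \<kappa>) * Gamma (2 - \<alpha>))) powr (1 / \<alpha>)"
        using taun[OF n] unfolding sig by simp
      have c: "(\<alpha>/2) * m * (4 * \<epsilon>^2 / h^2 + \<kappa>) \<le> (\<alpha>/2) * ((1 - \<alpha>/2) * tau t n) powr (- \<alpha>) / Gamma (2 - \<alpha>)"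
        by (rule coef_n2[OF alpha tn m_pos X0 Gp tb])
      have c3: "(\<alpha>/2) * ((1 - \<alpha>/2) * tau t n) powr (- \<alpha>) / Gamma (2 - \<alpha>) \<le> Bcoef \<alpha> t n n - Bcoef \<alpha> t n (n - 1)"
        by (rule C3[where t=t and n=n, OF alpha tinc_n ratio_n n2])
      have eqX: "\<sigma> * m * (\<kappa> + 4 * (\<epsilon>^2 / h^2)) = (\<alpha>/2) * m * (4 * \<epsilon>^2 / h^2 + \<kappa>)"
        unfolding sig by (simp add: algebra_simps)
      have ifn: "(if n - 1 = 0 then 0 else Bcoef \<alpha> t n (n - 1)) = Bcoef \<alpha> t n (n - 1)" using n2 by simp
      have "\<sigma> * m * (\<kappa> + 4 * (\<epsilon>^2 / h^2)) \<le> Bcoef \<alpha> t n n - Bcoef \<alpha> t n (n - 1)"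
        using c c3 eqX by linarith
      thus ?thesis unfolding ifn using m1 m2 n2 by simp
    qed
  qed
  have res: "norm_inf M (\<phi> n) \<le> \<beta> + \<kappa> * m * (V (g_h M h F (\<lambda>i j. (1 - \<sigma>) * \<phi>hat n i j + \<sigma> * \<phi> (n - 1) i j) (R (n - 1))) - 1) * \<beta>
          / (Bcoef \<alpha> t n n + \<kappa> * (1 - \<sigma>) * m)
      \<and> \<kappa> * m * (V (g_h M h F (\<lambda>i j. (1 - \<sigma>) * \<phi>hat n i j + \<sigma> * \<phi> (n - 1) i j) (R (n - 1))) - 1) * \<beta>
          / (Bcoef \<alpha> t n n + \<kappa> * (1 - \<sigma>) * m) \<le> 0"
    if n: "1 \<le> n" "n \<le> N" and hist: "\<And>k. k < n \<Longrightarrow> norm_inf M (\<phi> k) \<le> \<beta>" for n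
  proof -
    define Vn where "Vn = V (g_h M h F (\<lambda>i j. (1 - \<sigma>) * \<phi>hat n i j + \<sigma> * \<phi> (n - 1) i j) (R (n - 1)))"
    have V01: "0 \<le> Vn" "Vn \<le> 1" unfolding Vn_def using V_range by auto
    have cf: "(\<forall>k. 1 \<le> k \<longrightarrow> k < n - 1 \<longrightarrow> Bcoef \<alpha> t n k \<le> Bcoef \<alpha> t n (k + 1))
      \<and> (1 \<le> n - 1 \<longrightarrow> 0 \<le> Bcoef \<alpha> t n 1)
      \<and> \<sigma> * m * (\<kappa> + 4 * (\<epsilon>^2 / h^2)) \<le> Bcoef \<alpha> t n n - (if n - 1 = 0 then 0 else Bcoef \<alpha> t n (n - 1))"
      by (rule coefs[OF n])
    have q0: "0 \<le> (if n - 1 = 0 then 0 else Bcoef \<alpha> t n (n - 1))"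
    proof (cases "n - 1 = 0")
      case False
      have "0 \<le> Bcoef \<alpha> t n (n - 1)"
        by (rule nonneg_chain[where p="n - 1"]) (use cf False in auto)
      thus ?thesis by simp
    qed simp
    have pq: "0 < \<sigma> * m * (\<kappa> + 4 * (\<epsilon>^2 / h^2))" using sig0 m_pos kappa(1) w0 by simp
    have kk: "0 \<le> \<kappa> * (1 - \<sigma>) * m" using kappa(1) sig0 m_pos by simp
    have A: "0 < Bcoef \<alpha> t n n + \<kappa> * (1 - \<sigma>) * m" using cf q0 pq kk by linarith
    have hb: "\<bar>\<phi> k i j\<bar> \<le> \<beta>" if "k < n" "i < M" "j < M" for k i j
      using norm_inf_ge[OF that(2,3), of "\<phi> k"] hist[OF that(1)] by simp
    have hh: "\<bar>\<phi>hat n i j\<bar> \<le> \<beta>" if "i < M" "j < M" for i j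
    proof (cases "n = 1")
      case True
      thus ?thesis using norm_inf_ge[OF that, of "\<phi>hat 1"] hat1_bnd n by simp
    next
      case False
      hence "\<phi>hat n i j = min (max ((1 + rr t n) * \<phi> (n - 1) i j - rr t n * \<phi> (n - 2) i j) (- \<beta>)) \<beta>"
        using hat_pred[of n i j] n that by simp
      thus ?thesis using clamp_bound[OF bpos] by simp
    qed
    have bound: "\<bar>\<phi> n i j\<bar> \<le> \<beta> + \<kappa> * m * (Vn - 1) * \<beta> / (Bcoef \<alpha> t n n + \<kappa> * (1 - \<sigma>) * m)"
      if ij: "i < M" "j < M" for i j
    proof (rule step[where c="Bcoef \<alpha> t n" and hh="\<phi>hat n" and ee="\<epsilon>^2" and f=f, OF M_pos n(1) hne hb hh fbnd])
      show "\<And>k. 1 \<le> k \<Longrightarrow> k < n - 1 \<Longrightarrow> Bcoef \<alpha> t n k \<le> Bcoef \<alpha> t n (k + 1)" using cf by blast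
      show "1 \<le> n - 1 \<Longrightarrow> 0 \<le> Bcoef \<alpha> t n 1" using cf by blast
      show "\<sigma> * m * (\<kappa> + 4 * (\<epsilon>^2 / h^2)) \<le> Bcoef \<alpha> t n n - (if n - 1 = 0 then 0 else Bcoef \<alpha> t n (n - 1))"
        using cf by blast
      show "\<And>i j. i < M \<Longrightarrow> j < M \<Longrightarrow>
      (\<Sum>k = 1..n. Bcoef \<alpha> t n k * (\<phi> k i j - \<phi> (k - 1) i j)) =
      m * (\<epsilon>^2 * lap_h M h (\<lambda>i j. (1 - \<sigma>) * \<phi> n i j + \<sigma> * \<phi> (n - 1) i j) i j
          + Vn * f ((1 - \<sigma>) * \<phi>hat n i j + \<sigma> * \<phi> (n - 1) i j)
          - \<kappa> * (((1 - \<sigma>) * \<phi> n i j + \<sigma> * \<phi> (n - 1) i j) - Vn * ((1 - \<sigma>) * \<phi>hat n i j + \<sigma> * \<phi> (n - 1) i j)))"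
        using phi_eq n unfolding Vn_def Let_def by blast
    qed (use m_pos sig0 V01 kappa(1) A ij in auto)
    have "norm_inf M (\<phi> n) \<le> \<beta> + \<kappa> * m * (Vn - 1) * \<beta> / (Bcoef \<alpha> t n n + \<kappa> * (1 - \<sigma>) * m)"
      by (rule norm_inf_le[OF M_pos bound])
    moreover have "\<kappa> * m * (Vn - 1) * \<beta> / (Bcoef \<alpha> t n n + \<kappa> * (1 - \<sigma>) * m) \<le> 0"
    proof -
      have "\<kappa> * m * (1 - Vn) * \<beta> \<ge> 0" using kappa(1) m_pos V01 bpos by simp
      hence "\<kappa> * m * (Vn - 1) * \<beta> \<le> 0" by (simp add: algebra_simps)
      thus ?thesis using A by (simp add: divide_nonpos_pos)
    qed
    ultimately show ?thesis unfolding Vn_def by simp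
  qed
  have allb: "\<forall>n. n \<le> N \<longrightarrow> norm_inf M (\<phi> n) \<le> \<beta>"
  proof (intro allI)
    fix n show "n \<le> N \<longrightarrow> norm_inf M (\<phi> n) \<le> \<beta>"
    proof (induction n rule: less_induct)
      case (less n)
      show ?case
      proof (cases "n = 0")
        case True thus ?thesis using init by simp
      next
        case False
        show ?thesis
        proof
          assume nN: "n \<le> N"
          have "\<And>k. k < n \<Longrightarrow> norm_inf M (\<phi> k) \<le> \<beta>" using less nN by auto
          from res[OF _ nN this] False show "norm_inf M (\<phi> n) \<le> \<beta>" by linarith
        qed
      qed
    qed
  qed
  show ?thesis
  proof (intro allI impI)
    fix n assume n: "1 \<le> n \<and> n \<le> N"
    have "\<And>k. k < n \<Longrightarrow> norm_inf M (\<phi> k) \<le> \<beta>" using allb n by auto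
    from res[OF _ _ this] n show "let Vn = V (g_h M h F (\<lambda>i j. (1 - \<sigma>) * \<phi>hat n i j + \<sigma> * \<phi> (n - 1) i j) (R (n - 1)));
          corr = \<kappa> * m * (Vn - 1) * \<beta> / (Bcoef \<alpha> t n n + \<kappa> * (1 - \<sigma>) * m)
      in norm_inf M (\<phi> n) \<le> \<beta> + corr \<and> corr \<le> 0" unfolding Let_def by auto
  qed
qed


end
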